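(* Suppose that for some $C<\infty$ and $q>2$, $(\mathbb{E}[|Y(z)|^q])^{1/q}\le C$ and $\mathbb{E}[Y(z)^2\mid X=x]\le C$ for $z=0,1$ and all $x\in\mathcal{X}$. Let the observations $\{W_{ti}\}$ come from a non-adaptive batch experiment with batch propensities $e_1,\dots,e_T\in\mathcal{F}_\gamma$ for some $\gamma>0$, and let $e_{0,N}=\sum_t\frac{N_t}{N}e_t$, $e_0=\sum_t\kappa_te_t$. Define the AIPW score, for $\nu=(m(0,\cdot),m(1,\cdot))$, $$s_{\mathrm{AIPW}}(W;\theta,\nu,e)=m(1,X)-m(0,X)+\frac{Z(Y-m(1,X))}{e(X)}-\frac{(1-Z)(Y-m(0,X))}{1-e(X)}-\theta,$$ and write $s_{\mathrm{AIPW},b}=s_{\mathrm{AIPW}}+\theta$. Let $\nu_0=(m_0(0,\cdot),m_0(1,\cdot))$, $\theta_{0,\mathrm{ATE}}=\mathbb{E}[Y(1)-Y(0)]$, and $$\hat\theta^*_{\mathrm{AIPW}}=\frac1N\sum_{t=1}^T\sum_{i=1}^{N_t}s_{\mathrm{AIPW},b}(W_{ti};\nu_0,e_{0,N}).$$ Then $\sqrt N(\hat\theta^*_{\mathrm{AIPW}}-\theta_{0,\mathrm{ATE}})\xrightarrow{d}\mathcal{N}(0,V_{0,\mathrm{AIPW}})$ where $$V_{0,\mathrm{AIPW}}=\mathbb{E}\Big[\frac{v_0(1,X)}{e_0(X)}+\frac{v_0(0,X)}{1-e_0(X)}+\big(m_0(1,X)-m_0(0,X)-\theta_{0,\mathr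m{ATE}}\big)^2\Big].$$
   Context: Setting: $T\ge2$ batches, batch $t$ has $N_t$ subjects, $N=\sum_tN_t\to\infty$ with $N_t/N\to\kappa_t\in(0,1)$. The vectors $(X_{ti},Y_{ti}(0),Y_{ti}(1))$, $X_{ti}\in\mathcal{X}\subseteq\mathbb{R}^d$, are i.i.d. over all $t,i$ from a distribution $P^S$; expectations without subscript are under $P^S$. Observed data $W_{ti}=(X_{ti},Z_{ti},Y_{ti})$ with $Y_{ti}=Z_{ti}Y_{ti}(1)+(1-Z_{ti})Y_{ti}(0)$. $m_0(z,x)=\mathbb{E}[Y(z)\mid X=x]$, $v_0(z,x)=\mathrm{Var}(Y(z)\mid X=x)$. $\mathcal{F}_\gamma$ is the set of measurable functions $\mathcal{X}\to[\gamma,1-\gamma]$. A non-adaptive batch experiment with nonrandom propensities $e_1,\dots,e_T$ assigns $Z_{ti}=\mathbf{1}(U_{ti}\le e_t(X_{ti}))$ with $U_{ti}$ i.i.d. Uniform$(0,1)$ independent of all $(X_{ti},Y_{ti}(0),Y_{ti}(1))$. *)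

theory Defs
  imports "HOL-Probability.Probability"
begin

text \<open>A unit's full (latent) data: covariate X, potential outcomes Y(0), Y(1).\<close>

definition Xof :: "('x \<times> real \<times> real) \<Rightarrow> 'x" where
  "Xof w = fst w"

definition Ypot :: "nat \<Rightarrow> ('x \<times> real \<times> real) \<Rightarrow> real" where
  "Ypot z w = (if z = 1 then snd (snd w) else fst (snd w))"

definition cond_exp_version ::
  "'a measure \<Rightarrow> ('a \<Rightarrow> 'b::topological_space) \<Rightarrow> ('a \<Rightarrow> real) \<Rightarrow> ('b \<Rightarrow> real) \<Rightarrow> bool" where
  "cond_exp_version M X f g \<longleftrightarrow>
     g \<in> borel_measurable borel \<and> integrable M f \<and> integrable M (\<lambda>\<omega>. g (X \<omega>)) \<and>
     (\<forall>A \<in> sets borel. (\<integral>\<omega>. indicator A (X \<omega>) * f \<omega> \<partial>M) = (\<integral>\<omega>. indicator A (X \<omega>) * g (X \<omega>) \<partial>M))"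

definition normal_measure :: "real \<Rightarrow> real \<Rightarrow> real measure" where
  "normal_measure mu var =
     (if var = 0 then return borel mu else density lborel (normal_density mu (sqrt var)))"

text \<open>Distribution of one unit in the experiment: (X, Y(0), Y(1)) ~ P and an independent U ~ Uniform(0,1).\<close>
definition unit_measure :: "('x::topological_space \<times> real \<times> real) measure \<Rightarrow> (('x \<times> real \<times> real) \<times> real) measure" where
  "unit_measure P = P \<Otimes>\<^sub>M uniform_measure lborel {0..1}"

definition batch_index :: "nat \<Rightarrow> (nat \<Rightarrow> nat) \<Rightarrow> (nat \<times> nat) set" where
  "batch_index T Nt = {(t, i). t < T \<and> i < Nt t}"

definition Zobs :: "('x \<Rightarrow> real) \<Rightarrow> (('x \<times> real \<times> real) \<times> real) \<Rightarrow> real" where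
  "Zobs e u = (if snd u \<le> e (Xof (fst u)) then 1 else 0)"

definition Yobs :: "('x \<Rightarrow> real) \<Rightarrow> (('x \<times> real \<times> real) \<times> real) \<Rightarrow> real" where
  "Yobs e u = Zobs e u * Ypot 1 (fst u) + (1 - Zobs e u) * Ypot 0 (fst u)"

definition s_aipw_b :: "(nat \<Rightarrow> 'x \<Rightarrow> real) \<Rightarrow> ('x \<Rightarrow> real) \<Rightarrow> 'x \<Rightarrow> real \<Rightarrow> real \<Rightarrow> real" where
  "s_aipw_b m e x zz y =
     m 1 x - m 0 x + zz * (y - m 1 x) / e x - (1 - zz) * (y - m 0 x) / (1 - e x)"

end

theory Submission
  imports Defs
begin



lemma exp_neg_approx:
  fixes x :: real assumes "0 \<le> x"
  shows "\<bar>(1 - x) - exp (- x)\<bar> \<le> x^2"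
proof -
  have l: "1 - x \<le> exp (- x)" using exp_ge_add_one_self[of "-x"] by simp
  have q: "1 + x + x^2/2 \<le> exp x" by (rule exp_lower_Taylor_quadratic[OF assms])
  have pos: "0 < 1 + x + x^2/2" using assms by (simp add: add_pos_nonneg)
  have "(1 - x + x^2) * (1 + x + x^2/2) = 1 + x^2/2 + x^3/2 + x^4/2"
    by (simp add: field_simps power2_eq_square power3_eq_cube power4_eq_xxxx)
  also have "\<dots> \<ge> 1" using assms by simp
  finally have "1 \<le> (1 - x + x^2) * exp x"
  proof (rule order_trans)
    have "(x - 1/2)^2 = x^2 - x + 1/4" by (simp add: power2_eq_square field_simps)
    moreover have "0 \<le> (x - 1/2)^2" by simp
    ultimately have "0 \<le> 1 - x + x^2" by linarith
    then show "(1 - x + x^2) * (1 + x + x^2/2) \<le> (1 - x + x^2) * exp x"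
      by (rule mult_left_mono[OF q])
  qed
  then have "exp (- x) \<le> 1 - x + x^2"
    by (simp add: exp_minus field_simps)
  with l show ?thesis by (simp add: abs_if)
qed

lemma sq_le_of_abs_le: "\<bar>a\<bar> \<le> b \<Longrightarrow> a^2 \<le> (b::real)^2"
  by (metis abs_ge_zero abs_le_square_iff abs_of_nonneg order_trans)

lemma ntri: "norm (a - c) \<le> norm (a - b) + norm (b - (c::'a::real_normed_vector))"
  using norm_triangle_ineq[of "a - b" "b - c"] by simp

lemma clt_env:
  fixes U :: "'a measure" and J :: "nat \<Rightarrow> 'j set" and f :: "nat \<Rightarrow> 'j \<Rightarrow> 'a \<Rightarrow> real"
    and G :: "'a \<Rightarrow> real" and V s :: real
  assumes U: "prob_space U"
    and finJ: "\<And>n. finite (J n)"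
    and cardJ: "filterlim (\<lambda>n. card (J n)) at_top sequentially"
    and fm: "\<And>n j. j \<in> J n \<Longrightarrow> f n j \<in> borel_measurable U"
    and Gm: "G \<in> borel_measurable U" and G2: "integrable U (\<lambda>x. (G x)^2)"
    and fG: "\<And>n j. j \<in> J n \<Longrightarrow> AE x in U. \<bar>f n j x\<bar> \<le> G x"
    and mean0: "\<And>n j. j \<in> J n \<Longrightarrow> (\<integral>x. f n j x \<partial>U) = 0"
    and varlim: "(\<lambda>n. (\<Sum>j\<in>J n. \<integral>x. (f n j x)^2 \<partial>U) / card (J n)) \<longlonglongrightarrow> V"
  shows "(\<lambda>n. \<Prod>j\<in>J n. char (distr U borel (f n j)) (s / sqrt (card (J n))))
           \<longlonglongrightarrow> complex_of_real (exp (- (s^2 * V / 2)))"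
proof -
  interpret prob_space U by fact
  define B where "B = (\<integral>x. (G x)^2 \<partial>U)"
  define K where "K n = real (card (J n))" for n
  define rr where "rr n = s / sqrt (K n)" for n
  define \<sigma> where "\<sigma> n j = (\<integral>x. (f n j x)^2 \<partial>U)" for n j
  define \<rho> where "\<rho> n = (\<integral>x. min (6 * (G x)^2) (\<bar>rr n\<bar> * \<bar>G x\<bar>^3) \<partial>U)" for n
  have Kinf: "filterlim K at_top sequentially"
    unfolding K_def using filterlim_sequentially_iff_filterlim_real[of "\<lambda>n. card (J n)" sequentially] cardJ by simp
  have rr0: "rr \<longlonglongrightarrow> 0"
    unfolding rr_def
    by (intro tendsto_divide_0[OF tendsto_const] filterlim_at_top_imp_at_infinity
        filterlim_compose[OF sqrt_at_top Kinf])
  have f2i: "integrable U (\<lambda>x. (f n j x)^2)" if "j \<in> J n" for n j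
  proof (rule Bochner_Integration.integrable_bound[OF G2])
    show "(\<lambda>x. (f n j x)^2) \<in> borel_measurable U" using fm[OF that] by measurable
    show "AE x in U. norm ((f n j x)^2) \<le> norm ((G x)^2)"
      using fG[OF that] by eventually_elim (simp add: sq_le_of_abs_le)
  qed
  have fi: "integrable U (f n j)" if "j \<in> J n" for n j
    using square_integrable_imp_integrable[OF fm[OF that] f2i[OF that]] .
  have \<sigma>B: "\<sigma> n j \<le> B" "0 \<le> \<sigma> n j" if "j \<in> J n" for n j
  proof -
    show "\<sigma> n j \<le> B" unfolding \<sigma>_def B_def
      using fG[OF that] by (intro integral_mono_AE f2i[OF that] G2)
        (auto elim!: eventually_mono simp: sq_le_of_abs_le)
    show "0 \<le> \<sigma> n j" unfolding \<sigma>_def by simp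
  qed
  have Gmin_int: "integrable U (\<lambda>x. min (6 * (G x)^2) (\<bar>t\<bar> * \<bar>G x\<bar>^3))" for t
    by (rule Bochner_Integration.integrable_bound[where f="\<lambda>x. 6 * (G x)^2"])
       (use G2 Gm in auto)
  have \<rho>0: "\<rho> \<longlonglongrightarrow> 0"
  proof -
    have "(\<lambda>n. \<rho> n) \<longlonglongrightarrow> (\<integral>x. 0 \<partial>U)"
      unfolding \<rho>_def
    proof (rule integral_dominated_convergence[where w="\<lambda>x. 6 * (G x)^2"])
      show "AE x in U. (\<lambda>n. min (6 * (G x)^2) (\<bar>rr n\<bar> * \<bar>G x\<bar>^3)) \<longlonglongrightarrow> 0"
      proof (rule AE_I2)
        fix x
        have "(\<lambda>n. min (6 * (G x)^2) (\<bar>rr n\<bar> * \<bar>G x\<bar>^3)) \<longlonglongrightarrow> min (6 * (G x)^2) (\<bar>0\<bar> * \<bar>G x\<bar>^3)"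
          by (intro tendsto_intros rr0)
        then show "(\<lambda>n. min (6 * (G x)^2) (\<bar>rr n\<bar> * \<bar>G x\<bar>^3)) \<longlonglongrightarrow> 0" by simp
      qed
    qed (use G2 Gm in auto)
    then show ?thesis by simp
  qed
  have \<rho>nn: "0 \<le> \<rho> n" for n unfolding \<rho>_def by simp
  have approx: "cmod (char (distr U borel (f n j)) (rr n) - complex_of_real (1 - (rr n)^2 * \<sigma> n j / 2))
      \<le> (rr n)^2 / 6 * \<rho> n" if j: "j \<in> J n" for n j
  proof -
    have "cmod (char (distr U borel (f n j)) (rr n) - complex_of_real (1 - (rr n)^2 * \<sigma> n j / 2))
       \<le> (rr n)^2 / 6 * (\<integral>x. min (6 * (f n j x)^2) (\<bar>rr n\<bar> * \<bar>f n j x\<bar>^3) \<partial>U)"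
      by (rule char_approx3'[OF fm[OF j] fi[OF j] f2i[OF j] mean0[OF j]])
         (simp_all add: mean0[OF j] \<sigma>_def)
    also have "\<dots> \<le> (rr n)^2 / 6 * \<rho> n"
      unfolding \<rho>_def
    proof (intro mult_left_mono integral_mono_AE Gmin_int)
      show "integrable U (\<lambda>x. min (6 * (f n j x)^2) (\<bar>rr n\<bar> * \<bar>f n j x\<bar>^3))"
        by (rule Bochner_Integration.integrable_bound[where f="\<lambda>x. 6 * (f n j x)^2"])
           (use f2i[OF j] fm[OF j] in auto)
      show "AE x in U. min (6 * (f n j x)^2) (\<bar>rr n\<bar> * \<bar>f n j x\<bar>^3)
                       \<le> min (6 * (G x)^2) (\<bar>rr n\<bar> * \<bar>G x\<bar>^3)"
        using fG[OF j]
      proof eventually_elim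
        case (elim x)
        have a: "(f n j x)^2 \<le> (G x)^2" using elim by (simp add: sq_le_of_abs_le)
        have b: "\<bar>f n j x\<bar>^3 \<le> \<bar>G x\<bar>^3" using elim by (intro power_mono) auto
        show ?case
        proof (rule min.mono)
          show "6 * (f n j x)^2 \<le> 6 * (G x)^2" using a by simp
          show "\<bar>rr n\<bar> * \<bar>f n j x\<bar>^3 \<le> \<bar>rr n\<bar> * \<bar>G x\<bar>^3"
            by (rule mult_left_mono[OF b]) simp
        qed
      qed
    qed simp
    finally show ?thesis .
  qed
  define x where "x n j = (rr n)^2 * \<sigma> n j / 2" for n j
  define Sx where "Sx n = (\<Sum>j\<in>J n. x n j)" for n
  have rr2: "(rr n)^2 = s^2 / K n" if "K n > 0" for n
    using that unfolding rr_def by (simp add: power_divide)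
  have Kpos: "eventually (\<lambda>n. K n > 0) sequentially"
    using Kinf by (simp add: filterlim_at_top_dense)
  have cardK: "real (card (J n)) = K n" for n by (simp add: K_def)
  have bound: "cmod ((\<Prod>j\<in>J n. char (distr U borel (f n j)) (rr n)) - complex_of_real (exp (- Sx n)))
      \<le> s^2 / 6 * \<rho> n + s^4 * B^2 / (4 * K n)" if Kp: "K n > 0" for n
  proof -
    have E1: "complex_of_real (exp (- Sx n)) = (\<Prod>j\<in>J n. complex_of_real (exp (- x n j)))"
    proof -
      have "exp (- Sx n) = (\<Prod>j\<in>J n. exp (- x n j))"
        unfolding Sx_def sum_negf[symmetric] by (rule exp_sum[OF finJ])
      then show ?thesis by simp
    qed
    have E2: "cmod ((\<Prod>j\<in>J n. char (distr U borel (f n j)) (rr n)) - (\<Prod>j\<in>J n. complex_of_real (exp (- x n j))))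
      \<le> (\<Sum>j\<in>J n. cmod (char (distr U borel (f n j)) (rr n) - complex_of_real (exp (- x n j))))"
    proof (rule norm_prod_diff)
      fix j assume j: "j \<in> J n"
      interpret rd: real_distribution "distr U borel (f n j)"
        using fm[OF j] by (simp add: real_distribution_distr)
      show "cmod (char (distr U borel (f n j)) (rr n)) \<le> 1" by (rule rd.cmod_char_le_1)
      show "cmod (complex_of_real (exp (- x n j))) \<le> 1"
        using \<sigma>B[OF j] by (simp add: x_def)
    qed
    have E3: "cmod (char (distr U borel (f n j)) (rr n) - complex_of_real (exp (- x n j)))
       \<le> (rr n)^2 / 6 * \<rho> n + ((rr n)^2 * B / 2)^2" if j: "j \<in> J n" for j
    proof -
      have x0: "0 \<le> x n j" using \<sigma>B[OF j] by (simp add: x_def)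
      have "cmod (char (distr U borel (f n j)) (rr n) - complex_of_real (exp (- x n j)))
        \<le> cmod (char (distr U borel (f n j)) (rr n) - complex_of_real (1 - x n j))
           + cmod (complex_of_real (1 - x n j) - complex_of_real (exp (- x n j)))"
        by (rule ntri)
      also have "cmod (complex_of_real (1 - x n j) - complex_of_real (exp (- x n j))) \<le> (x n j)^2"
        using exp_neg_approx[OF x0] by (simp del: of_real_diff add: of_real_diff[symmetric])
      also have "cmod (char (distr U borel (f n j)) (rr n) - complex_of_real (1 - x n j)) \<le> (rr n)^2 / 6 * \<rho> n"
        using approx[OF j] by (simp add: x_def)
      also have "(x n j)^2 \<le> ((rr n)^2 * B / 2)^2"
        unfolding x_def using \<sigma>B[OF j] by (intro power_mono) (auto intro!: divide_right_mono mult_left_mono)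
      finally show ?thesis by simp
    qed
    have "cmod ((\<Prod>j\<in>J n. char (distr U borel (f n j)) (rr n)) - complex_of_real (exp (- Sx n)))
       \<le> (\<Sum>j\<in>J n. cmod (char (distr U borel (f n j)) (rr n) - complex_of_real (exp (- x n j))))"
      unfolding E1 by (rule E2)
    also have "\<dots> \<le> (\<Sum>j\<in>J n. (rr n)^2 / 6 * \<rho> n + ((rr n)^2 * B / 2)^2)"
      by (rule sum_mono) (rule E3)
    also have "\<dots> = K n * ((rr n)^2 / 6 * \<rho> n + ((rr n)^2 * B / 2)^2)"
      by (simp add: cardK)
    also have "\<dots> = s^2 / 6 * \<rho> n + s^4 * B^2 / (4 * K n)"
      unfolding rr2[OF Kp] using Kp by (simp add: field_simps power2_eq_square power4_eq_xxxx)
    finally show ?thesis .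
  qed
  have lim1: "(\<lambda>n. s^2 / 6 * \<rho> n + s^4 * B^2 / (4 * K n)) \<longlonglongrightarrow> 0"
  proof -
    have "(\<lambda>n. s^2 / 6 * \<rho> n + s^4 * B^2 / (4 * K n)) \<longlonglongrightarrow> s^2 / 6 * 0 + 0"
      by (intro tendsto_add tendsto_mult tendsto_const \<rho>0 tendsto_divide_0[OF tendsto_const]
          filterlim_at_top_imp_at_infinity filterlim_tendsto_pos_mult_at_top[OF tendsto_const _ Kinf]) simp
    then show ?thesis by simp
  qed
  have diff0: "(\<lambda>n. (\<Prod>j\<in>J n. char (distr U borel (f n j)) (rr n)) - complex_of_real (exp (- Sx n))) \<longlonglongrightarrow> 0"
    by (rule Lim_null_comparison[OF _ lim1]) (use Kpos bound in \<open>auto elim: eventually_mono\<close>)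
  have "(\<lambda>n. s^2 / 2 * ((\<Sum>j\<in>J n. \<integral>x. (f n j x)^2 \<partial>U) / card (J n))) \<longlonglongrightarrow> s^2 / 2 * V"
    by (intro tendsto_intros varlim)
  moreover have "eventually (\<lambda>n. s^2 / 2 * ((\<Sum>j\<in>J n. \<integral>x. (f n j x)^2 \<partial>U) / card (J n)) = Sx n) sequentially"
    using Kpos
  proof eventually_elim
    case (elim n)
    show ?case unfolding Sx_def x_def \<sigma>_def using elim
      by (simp add: rr2 cardK sum_distrib_left sum_divide_distrib[symmetric] field_simps)
  qed
  ultimately have "Sx \<longlonglongrightarrow> s^2 / 2 * V" by (rule Lim_transform_eventually)
  then have "(\<lambda>n. complex_of_real (exp (- Sx n))) \<longlonglongrightarrow> complex_of_real (exp (- (s^2 * V / 2)))"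
    by (auto intro!: tendsto_intros)
  from tendsto_add[OF diff0 this]
  have "(\<lambda>n. \<Prod>j\<in>J n. char (distr U borel (f n j)) (rr n)) \<longlonglongrightarrow> complex_of_real (exp (- (s^2 * V / 2)))"
    by simp
  then show ?thesis unfolding rr_def K_def .
qed


lemma normal_measure0:
  assumes V: "0 \<le> V"
  shows "real_distribution (normal_measure 0 V)"
    "char (normal_measure 0 V) s = complex_of_real (exp (- (s^2 * V / 2)))"
proof -
  show "real_distribution (normal_measure 0 V)"
  proof (cases "V = 0")
    case True
    then show ?thesis unfolding normal_measure_def real_distribution_def real_distribution_axioms_def
      by (simp add: prob_space_return)
  next
    case False
    then show ?thesis unfolding normal_measure_def real_distribution_def real_distribution_axioms_def
      using prob_space_normal_density[of "sqrt V" 0] V False by simp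
  qed
  show "char (normal_measure 0 V) s = complex_of_real (exp (- (s^2 * V / 2)))"
  proof (cases "V = 0")
    case True
    then show ?thesis unfolding normal_measure_def char_def
      by (simp add: integral_return)
  next
    case False
    define \<sigma> where "\<sigma> = sqrt V"
    have \<sigma>: "\<sigma> > 0" using V False by (simp add: \<sigma>_def)
    have eq: "normal_density 0 \<sigma> (0 + \<sigma> * y) = std_normal_density y / \<sigma>" for y
    proof -
      have a: "sqrt (2 * pi * \<sigma>\<^sup>2) = sqrt (2 * pi) * \<sigma>" using \<sigma> by (simp add: real_sqrt_mult)
      have b: "- ((0 + \<sigma> * y - 0)\<^sup>2) / (2 * \<sigma>\<^sup>2) = - ((y - 0)\<^sup>2) / (2 * 1\<^sup>2)" using \<sigma> by (simp add: power_mult_distrib)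
      show ?thesis unfolding normal_density_def a b by simp
    qed
    have "char (normal_measure 0 V) s = (\<integral>x. normal_density 0 \<sigma> x *\<^sub>R iexp (s * x) \<partial>lborel)"
      unfolding normal_measure_def char_def using False \<sigma>_def
      by (simp add: integral_density)
    also have "\<dots> = \<bar>\<sigma>\<bar> *\<^sub>R (\<integral>y. normal_density 0 \<sigma> (0 + \<sigma> * y) *\<^sub>R iexp (s * (0 + \<sigma> * y)) \<partial>lborel)"
      by (rule lborel_integral_real_affine) (use \<sigma> in simp)
    also have "\<dots> = (\<integral>y. \<bar>\<sigma>\<bar> *\<^sub>R (normal_density 0 \<sigma> (0 + \<sigma> * y) *\<^sub>R iexp (s * (0 + \<sigma> * y))) \<partial>lborel)"
      by (rule integral_scaleR_right[symmetric])
    also have "\<dots> = (\<integral>y. std_normal_density y *\<^sub>R iexp ((s * \<sigma>) * y) \<partial>lborel)"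
    proof (rule Bochner_Integration.integral_cong[OF refl])
      fix y
      show "\<bar>\<sigma>\<bar> *\<^sub>R (normal_density 0 \<sigma> (0 + \<sigma> * y) *\<^sub>R iexp (s * (0 + \<sigma> * y))) = std_normal_density y *\<^sub>R iexp ((s * \<sigma>) * y)"
        unfolding eq using \<sigma> by (simp add: mult.assoc)
    qed
    also have "\<dots> = char std_normal_distribution (s * \<sigma>)"
      unfolding char_def by (simp add: integral_density)
    also have "\<dots> = complex_of_real (exp (- (s^2 * V / 2)))"
      using V by (simp add: char_std_normal_distribution \<sigma>_def power_mult_distrib)
    finally show ?thesis .
  qed
qed


lemma char_PiM_sum:
  fixes U :: "'a measure" and I :: "'j set" and h :: "'j \<Rightarrow> 'a \<Rightarrow> real"
  assumes U: "prob_space U" and fin: "finite I" and hm: "\<And>j. j \<in> I \<Longrightarrow> h j \<in> borel_measurable U"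
  shows "char (distr (PiM I (\<lambda>_. U)) borel (\<lambda>\<omega>. \<Sum>j\<in>I. h j (\<omega> j))) s = (\<Prod>j\<in>I. char (distr U borel (h j)) s)"
proof -
  interpret product_prob_space "\<lambda>_. U" I
    by (simp add: product_prob_space_def product_prob_space_axioms_def product_sigma_finite_def U
        prob_space_imp_sigma_finite)
  have Sm: "(\<lambda>\<omega>. \<Sum>j\<in>I. h j (\<omega> j)) \<in> borel_measurable (PiM I (\<lambda>_. U))"
  proof (rule borel_measurable_sum)
    fix j assume j: "j \<in> I"
    show "(\<lambda>\<omega>. h j (\<omega> j)) \<in> borel_measurable (PiM I (\<lambda>_. U))"
      using measurable_compose[OF measurable_component_singleton[OF j, of "\<lambda>_. U"] hm[OF j]] .
  qed
  have "char (distr (PiM I (\<lambda>_. U)) borel (\<lambda>\<omega>. \<Sum>j\<in>I. h j (\<omega> j))) s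
      = (\<integral>\<omega>. iexp (s * (\<Sum>j\<in>I. h j (\<omega> j))) \<partial>PiM I (\<lambda>_. U))"
    unfolding char_def by (rule integral_distr[OF Sm]) simp
  also have "\<dots> = (\<integral>\<omega>. (\<Prod>j\<in>I. iexp (s * h j (\<omega> j))) \<partial>PiM I (\<lambda>_. U))"
  proof (rule Bochner_Integration.integral_cong[OF refl])
    fix \<omega>
    have "\<i> * complex_of_real (s * (\<Sum>j\<in>I. h j (\<omega> j))) = (\<Sum>j\<in>I. \<i> * complex_of_real (s * h j (\<omega> j)))"
      by (simp add: sum_distrib_left)
    then show "iexp (s * (\<Sum>j\<in>I. h j (\<omega> j))) = (\<Prod>j\<in>I. iexp (s * h j (\<omega> j)))"
      by (simp add: exp_sum[OF fin])
  qed
  also have "\<dots> = (\<Prod>j\<in>I. \<integral>x. iexp (s * h j x) \<partial>U)"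
  proof (rule product_integral_prod[OF fin, where f="\<lambda>j x. iexp (s * h j x)"])
    fix j assume j: "j \<in> I"
    show "integrable U (\<lambda>x. iexp (s * h j x))"
      by (rule U[THEN prob_space.integrable_iexp]) (use hm[OF j] in auto)
  qed
  also have "\<dots> = (\<Prod>j\<in>I. char (distr U borel (h j)) s)"
  proof (rule prod.cong[OF refl])
    fix j assume j: "j \<in> I"
    show "(\<integral>x. iexp (s * h j x) \<partial>U) = char (distr U borel (h j)) s"
      unfolding char_def by (rule integral_distr[OF hm[OF j], symmetric]) simp
  qed
  finally show ?thesis .
qed


lemma Xof_meas[measurable]: "Xof \<in> borel_measurable (borel :: ('a::{second_countable_topology} \<times> real \<times> real) measure)"
  unfolding Xof_def by (intro borel_measurable_continuous_onI continuous_intros)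
lemma Ypot_meas[measurable]: "Ypot z \<in> borel_measurable (borel :: ('a::{second_countable_topology} \<times> real \<times> real) measure)"
  unfolding Ypot_def by (cases "z = 1") (auto intro!: borel_measurable_continuous_onI continuous_intros)

lemma condexp_ext:
  fixes M :: "'a measure" and X :: "'a \<Rightarrow> 'b::topological_space"
  assumes M: "prob_space M" and Xm[measurable]: "X \<in> M \<rightarrow>\<^sub>M borel"
    and ce: "cond_exp_version M X f g" and fm[measurable]: "f \<in> borel_measurable M"
    and km[measurable]: "k \<in> borel_measurable borel"
    and int: "integrable M (\<lambda>w. k (X w) * f w)"
  shows "integrable M (\<lambda>w. k (X w) * g (X w))"
    "(\<integral>w. k (X w) * f w \<partial>M) = (\<integral>w. k (X w) * g (X w) \<partial>M)"
proof -
  interpret prob_space M by fact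
  define F where "F = vimage_algebra (space M) X borel"
  have Xsp: "X \<in> space M \<rightarrow> space borel" by auto
  have setsF: "sets F = {X -` A \<inter> space M |A. A \<in> sets borel}"
    unfolding F_def by (rule sets_vimage_algebra2[OF Xsp])
  have sub: "subalgebra M F"
    unfolding subalgebra_def using setsF by (auto simp: F_def)
  interpret finite_measure_subalgebra M F
    by unfold_locales (rule sub)
  have gm[measurable]: "g \<in> borel_measurable borel" and fi: "integrable M f"
    and gi: "integrable M (\<lambda>w. g (X w))"
    and gA: "\<And>A. A \<in> sets borel \<Longrightarrow> (\<integral>\<omega>. indicator A (X \<omega>) * f \<omega> \<partial>M) = (\<integral>\<omega>. indicator A (X \<omega>) * g (X \<omega>) \<partial>M)"
    using ce unfolding cond_exp_version_def by auto
  have XF: "X \<in> F \<rightarrow>\<^sub>M borel"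
    unfolding F_def by (rule measurable_vimage_algebra1) (use Xsp in auto)
  have gXF: "(\<lambda>w. g (X w)) \<in> borel_measurable F"
    using measurable_comp[OF XF gm] by (simp add: comp_def)
  have kXF: "(\<lambda>w. k (X w)) \<in> borel_measurable F"
    using measurable_comp[OF XF km] by (simp add: comp_def)
  have AEeq: "AE x in M. real_cond_exp M F f x = g (X x)"
  proof (rule real_cond_exp_charact)
    fix A assume "A \<in> sets F"
    then obtain B where B: "B \<in> sets borel" "A = X -` B \<inter> space M" using setsF by auto
    have "(\<integral>x\<in>A. f x \<partial>M) = (\<integral>x. indicator B (X x) * f x \<partial>M)"
      unfolding B(2) set_lebesgue_integral_def by (rule Bochner_Integration.integral_cong) (auto simp: indicator_def)
    also have "\<dots> = (\<integral>x. indicator B (X x) * g (X x) \<partial>M)" by (rule gA[OF B(1)])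
    also have "\<dots> = (\<integral>x\<in>A. g (X x) \<partial>M)"
      unfolding B(2) set_lebesgue_integral_def by (rule Bochner_Integration.integral_cong) (auto simp: indicator_def)
    finally show "(\<integral>x\<in>A. f x \<partial>M) = (\<integral>x\<in>A. g (X x) \<partial>M)" .
  qed (use fi gi gXF in auto)
  have i1: "integrable M (\<lambda>x. k (X x) * real_cond_exp M F f x)"
    and e1: "(\<integral>x. k (X x) * real_cond_exp M F f x \<partial>M) = (\<integral>x. k (X x) * f x \<partial>M)"
    using real_cond_exp_intg[OF int kXF fm] by auto
  have ae: "AE x in M. k (X x) * real_cond_exp M F f x = k (X x) * g (X x)"
    using AEeq by auto
  have m2: "(\<lambda>x. k (X x) * g (X x)) \<in> borel_measurable M" by measurable
  have m1: "(\<lambda>x. k (X x) * real_cond_exp M F f x) \<in> borel_measurable M" by measurable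
  show "integrable M (\<lambda>w. k (X w) * g (X w))"
    using integrable_cong_AE_imp[OF i1 m2 ae] .
  have "(\<integral>x. k (X x) * real_cond_exp M F f x \<partial>M) = (\<integral>x. k (X x) * g (X x) \<partial>M)"
    by (rule integral_cong_AE[OF m1 m2 ae])
  then show "(\<integral>w. k (X w) * f w \<partial>M) = (\<integral>w. k (X w) * g (X w) \<partial>M)"
    using e1 by simp
qed

lemma L2_prod:
  fixes f g :: "'a \<Rightarrow> real"
  assumes "f \<in> borel_measurable M" "g \<in> borel_measurable M"
    "integrable M (\<lambda>x. (f x)^2)" "integrable M (\<lambda>x. (g x)^2)"
  shows "integrable M (\<lambda>x. f x * g x)"
proof (rule Bochner_Integration.integrable_bound[where f="\<lambda>x. (f x)^2 + (g x)^2"])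
  show "integrable M (\<lambda>x. (f x)^2 + (g x)^2)" using assms by auto
  show "(\<lambda>x. f x * g x) \<in> borel_measurable M" using assms by measurable
  show "AE x in M. norm (f x * g x) \<le> norm ((f x)^2 + (g x)^2)"
  proof (rule AE_I2)
    fix x
    have "0 \<le> (\<bar>f x\<bar> - \<bar>g x\<bar>)^2" by simp
    then have "2 * \<bar>f x\<bar> * \<bar>g x\<bar> \<le> (f x)^2 + (g x)^2"
      by (simp add: power2_eq_square algebra_simps)
    moreover have "0 \<le> \<bar>f x\<bar> * \<bar>g x\<bar>" by simp
    ultimately have "\<bar>f x\<bar> * \<bar>g x\<bar> \<le> (f x)^2 + (g x)^2" by linarith
    then show "norm (f x * g x) \<le> norm ((f x)^2 + (g x)^2)"
      by (simp add: abs_mult)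
  qed
qed

lemma L2_add:
  fixes f g :: "'a \<Rightarrow> real"
  assumes "f \<in> borel_measurable M" "g \<in> borel_measurable M"
    "integrable M (\<lambda>x. (f x)^2)" "integrable M (\<lambda>x. (g x)^2)"
  shows "integrable M (\<lambda>x. (f x + g x)^2)"
proof -
  have "integrable M (\<lambda>x. (f x)^2 + 2 * (f x * g x) + (g x)^2)"
    using L2_prod[OF assms] assms by auto
  then show ?thesis by (simp add: power2_sum mult.assoc add.commute add.left_commute)
qed

lemma L2_bounded_mult:
  fixes f k :: "'a \<Rightarrow> real"
  assumes "f \<in> borel_measurable M" "k \<in> borel_measurable M"
    "integrable M f" "AE x in M. \<bar>k x\<bar> \<le> K"
  shows "integrable M (\<lambda>x. k x * f x)"
proof (rule Bochner_Integration.integrable_bound[where f="\<lambda>x. K * f x"])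
  show "integrable M (\<lambda>x. K * f x)" using assms by auto
  show "(\<lambda>x. k x * f x) \<in> borel_measurable M" using assms by measurable
  show "AE x in M. norm (k x * f x) \<le> norm (K * f x)"
    using assms(4) by eventually_elim (auto simp: abs_mult intro: mult_right_mono)
qed

locale aipw_setup =
  fixes P :: "('x::{second_countable_topology} \<times> real \<times> real) measure"
    and XX :: "'x set" and m0 v0 :: "nat \<Rightarrow> 'x \<Rightarrow> real" and \<gamma> \<theta>0 :: real
  assumes P_prob: "prob_space P"
    and P_sets: "sets P = sets borel"
    and XX_sets: "XX \<in> sets borel"
    and XX_supp: "AE w in P. Xof w \<in> XX"
    and gamma_pos: "\<gamma> > 0"
    and Y2: "\<And>z. z \<in> {0,1} \<Longrightarrow> integrable P (\<lambda>w. (Ypot z w)^2)"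
    and m0_def: "\<forall>z\<in>{0,1}. cond_exp_version P Xof (Ypot z) (m0 z)"
    and v0_def: "\<forall>z\<in>{0,1}. cond_exp_version P Xof (\<lambda>w. (Ypot z w - m0 z (Xof w))\<^sup>2) (v0 z)"
    and theta_def: "\<theta>0 = (\<integral>w. Ypot 1 w - Ypot 0 w \<partial>P)"
begin

interpretation prob_space P by (rule P_prob)

lemma Xm[measurable]: "Xof \<in> P \<rightarrow>\<^sub>M borel"
  using P_sets by (simp cong: measurable_cong_sets)
lemma Ym[measurable]: "Ypot z \<in> borel_measurable P"
  using P_sets by (simp cong: measurable_cong_sets)
lemma mm[measurable]: "z \<in> {0,1} \<Longrightarrow> m0 z \<in> borel_measurable borel"
  using m0_def unfolding cond_exp_version_def by auto
lemma vm[measurable]: "z \<in> {0,1} \<Longrightarrow> v0 z \<in> borel_measurable borel"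
  using v0_def unfolding cond_exp_version_def by auto
lemma XXm[measurable]: "XX \<in> sets borel" by (rule XX_sets)

lemma m0m[measurable]: "m0 0 \<in> borel_measurable borel" "m0 1 \<in> borel_measurable borel"
  using mm by auto
lemma v0m[measurable]: "v0 0 \<in> borel_measurable borel" "v0 1 \<in> borel_measurable borel"
  using vm by auto

lemma R2: "z \<in> {0,1} \<Longrightarrow> integrable P (\<lambda>w. (Ypot z w - m0 z (Xof w))^2)"
  using v0_def unfolding cond_exp_version_def by auto
lemma vint: "z \<in> {0,1} \<Longrightarrow> integrable P (\<lambda>w. v0 z (Xof w))"
  using v0_def unfolding cond_exp_version_def by auto

lemma M2: assumes z: "z \<in> {0,1}" shows "integrable P (\<lambda>w. (m0 z (Xof w))^2)"
proof -
  have m[measurable]: "m0 z \<in> borel_measurable borel" using z by (rule mm)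
  have "integrable P (\<lambda>w. (Ypot z w + (- (Ypot z w - m0 z (Xof w))))^2)"
    by (rule L2_add) (use Y2[OF z] R2[OF z] in \<open>simp_all add: power2_commute\<close>)
  then show ?thesis by simp
qed

definition "Dx x = m0 1 x - m0 0 x - \<theta>0"
lemma Dm[measurable]: "Dx \<in> borel_measurable borel" unfolding Dx_def by measurable

lemma D2: "integrable P (\<lambda>w. (Dx (Xof w))^2)"
proof -
  have "integrable P (\<lambda>w. (m0 1 (Xof w) + (- m0 0 (Xof w) + - \<theta>0))^2)"
    by (intro L2_add) (use M2 in auto)
  moreover have "(\<lambda>w. (m0 1 (Xof w) + (- m0 0 (Xof w) + - \<theta>0))^2) = (\<lambda>w. (Dx (Xof w))^2)"
    by (simp add: Dx_def algebra_simps)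
  ultimately show ?thesis by simp
qed


lemma KLz:
  assumes z: "z \<in> {0,1}" and km[measurable]: "k \<in> borel_measurable borel"
    and int: "integrable P (\<lambda>w. k (Xof w) * Ypot z w)"
  shows "integrable P (\<lambda>w. k (Xof w) * (Ypot z w - m0 z (Xof w)))"
    "(\<integral>w. k (Xof w) * (Ypot z w - m0 z (Xof w)) \<partial>P) = 0"
proof -
  have ce: "cond_exp_version P Xof (Ypot z) (m0 z)" using m0_def z by auto
  note c = condexp_ext[OF P_prob Xm ce Ym km int]
  show i: "integrable P (\<lambda>w. k (Xof w) * (Ypot z w - m0 z (Xof w)))"
    using int c(1) by (simp add: right_diff_distrib)
  show "(\<integral>w. k (Xof w) * (Ypot z w - m0 z (Xof w)) \<partial>P) = 0"
    using int c by (simp add: right_diff_distrib)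
qed

lemma KLv:
  assumes z: "z \<in> {0,1}" and km[measurable]: "k \<in> borel_measurable borel"
    and kb: "\<And>x. \<bar>k x\<bar> \<le> K"
  shows "integrable P (\<lambda>w. k (Xof w) * (Ypot z w - m0 z (Xof w))^2)"
    "(\<integral>w. k (Xof w) * (Ypot z w - m0 z (Xof w))^2 \<partial>P) = (\<integral>w. k (Xof w) * v0 z (Xof w) \<partial>P)"
    "integrable P (\<lambda>w. k (Xof w) * v0 z (Xof w))"
proof -
  have ce: "cond_exp_version P Xof (\<lambda>w. (Ypot z w - m0 z (Xof w))^2) (v0 z)" using v0_def z by auto
  have [measurable]: "m0 z \<in> borel_measurable borel" using z by (rule mm)
  show int: "integrable P (\<lambda>w. k (Xof w) * (Ypot z w - m0 z (Xof w))^2)"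
    by (rule L2_bounded_mult[where K=K]) (use R2[OF z] kb in auto)
  note c = condexp_ext[OF P_prob Xm ce _ km int]
  show "(\<integral>w. k (Xof w) * (Ypot z w - m0 z (Xof w))^2 \<partial>P) = (\<integral>w. k (Xof w) * v0 z (Xof w) \<partial>P)"
    "integrable P (\<lambda>w. k (Xof w) * v0 z (Xof w))"
    using c by auto
qed

lemma mean_m: assumes z: "z \<in> {0,1}" shows "(\<integral>w. m0 z (Xof w) \<partial>P) = (\<integral>w. Ypot z w \<partial>P)"
  "integrable P (\<lambda>w. m0 z (Xof w))" "integrable P (Ypot z)"
proof -
  have i: "integrable P (\<lambda>w. (\<lambda>_. 1::real) (Xof w) * Ypot z w)"
    using Y2[OF z] square_integrable_imp_integrable[OF Ym] by simp
  note c = KLz[OF z _ i]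
  show iy: "integrable P (Ypot z)" using i by simp
  have ir: "integrable P (\<lambda>w. Ypot z w - m0 z (Xof w))" and e: "(\<integral>w. Ypot z w - m0 z (Xof w) \<partial>P) = 0"
    using c by simp_all
  have "integrable P (\<lambda>w. Ypot z w - (Ypot z w - m0 z (Xof w)))"
    by (rule Bochner_Integration.integrable_diff[OF iy ir])
  then show im: "integrable P (\<lambda>w. m0 z (Xof w))" by simp
  have "(\<integral>w. Ypot z w - m0 z (Xof w) \<partial>P) = (\<integral>w. Ypot z w \<partial>P) - (\<integral>w. m0 z (Xof w) \<partial>P)"
    by (rule Bochner_Integration.integral_diff[OF iy im])
  then show "(\<integral>w. m0 z (Xof w) \<partial>P) = (\<integral>w. Ypot z w \<partial>P)" using e by simp
qed

lemma D_mean: "(\<integral>w. Dx (Xof w) \<partial>P) = 0" "integrable P (\<lambda>w. Dx (Xof w))"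
proof -
  have a: "integrable P (\<lambda>w. m0 1 (Xof w))" "integrable P (\<lambda>w. m0 0 (Xof w))"
    "integrable P (Ypot 1)" "integrable P (Ypot 0)" using mean_m by auto
  show "integrable P (\<lambda>w. Dx (Xof w))" unfolding Dx_def using a by auto
  have "(\<integral>w. Dx (Xof w) \<partial>P) = (\<integral>w. m0 1 (Xof w) \<partial>P) - (\<integral>w. m0 0 (Xof w) \<partial>P) - \<theta>0"
    unfolding Dx_def using a by (simp add: Bochner_Integration.integral_diff prob_space)
  also have "\<dots> = 0" using mean_m[of 1] mean_m[of 0] a
    by (simp add: theta_def Bochner_Integration.integral_diff)
  finally show "(\<integral>w. Dx (Xof w) \<partial>P) = 0" .
qed


definition "Qm = uniform_measure lborel {0..1::real}"

lemma Q_prob: "prob_space Qm"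
  unfolding Qm_def by (rule prob_space_uniform_measure) auto

lemma sets_Qm[measurable_cong]: "sets Qm = sets borel"
  unfolding Qm_def by simp

lemma U_eq: "unit_measure P = P \<Otimes>\<^sub>M Qm"
  unfolding unit_measure_def Qm_def ..

lemma pair_PQ: "pair_sigma_finite P Qm"
  using P_prob Q_prob by (simp add: pair_sigma_finite_def prob_space_imp_sigma_finite)

lemma inner:
  assumes c: "0 \<le> c" "c \<le> 1"
  shows "(\<integral>r. (if r \<le> c then a else b) \<partial>Qm) = c * a + (1 - c) * (b::real)"
proof -
  interpret Q: prob_space Qm by (rule Q_prob)
  have "(\<integral>r. (if r \<le> c then a else b) \<partial>Qm) = (\<integral>r. b + (a - b) * indicator {..c} r \<partial>Qm)"
    by (rule Bochner_Integration.integral_cong) (auto simp: indicator_def)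
  also have "\<dots> = (\<integral>r. b \<partial>Qm) + (\<integral>r. (a - b) * indicator {..c} r \<partial>Qm)"
    by (rule Bochner_Integration.integral_add) (auto intro!: integrable_real_indicator simp: sets_Qm Q.emeasure_eq_measure)
  also have "\<dots> = b + (a - b) * measure Qm {..c}"
    by (simp add: Q.prob_space sets_Qm)
  also have "measure Qm {..c} = c"
  proof -
    have "{0..1} \<inter> {..c} = {0..c}" using c by auto
    then show ?thesis unfolding Qm_def using c by simp
  qed
  finally show ?thesis by (simp add: algebra_simps)
qed

definition "hs p \<epsilon> u = s_aipw_b m0 \<epsilon> (Xof (fst u)) (Zobs p u) (Yobs p u) - \<theta>0"
definition "H1 \<epsilon> w = Dx (Xof w) + (Ypot 1 w - m0 1 (Xof w)) / \<epsilon> (Xof w)"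
definition "H0 \<epsilon> w = Dx (Xof w) - (Ypot 0 w - m0 0 (Xof w)) / (1 - \<epsilon> (Xof w))"
definition "Gf w = \<bar>Dx (Xof w)\<bar> + (\<bar>Ypot 1 w\<bar> + \<bar>m0 1 (Xof w)\<bar>) / \<gamma> + (\<bar>Ypot 0 w\<bar> + \<bar>m0 0 (Xof w)\<bar>) / \<gamma>"

lemma hs_eq: "hs p \<epsilon> (w, r) = (if r \<le> p (Xof w) then H1 \<epsilon> w else H0 \<epsilon> w)"
  unfolding hs_def H1_def H0_def s_aipw_b_def Zobs_def Yobs_def Dx_def by simp

lemma Gf_meas[measurable]: "Gf \<in> borel_measurable P"
  unfolding Gf_def by measurable

lemma hs_meas[measurable]:
  assumes [measurable]: "p \<in> borel_measurable borel" "\<epsilon> \<in> borel_measurable borel"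
  shows "hs p \<epsilon> \<in> borel_measurable (P \<Otimes>\<^sub>M Qm)"
  unfolding hs_def s_aipw_b_def Zobs_def Yobs_def by measurable

lemma Gf2: "integrable P (\<lambda>w. (Gf w)^2)"
proof -
  have m[measurable]: "m0 1 \<in> borel_measurable borel" "m0 0 \<in> borel_measurable borel" by (auto intro: mm)
  have a: "integrable P (\<lambda>w. (\<bar>f w\<bar>)^2)" if "integrable P (\<lambda>w. (f w)^2)" for f :: "_ \<Rightarrow> real"
    using that by simp
  have c: "integrable P (\<lambda>w. (f w / \<gamma>)^2)" if "integrable P (\<lambda>w. (f w)^2)" for f :: "_ \<Rightarrow> real"
    using that by (simp add: power_divide)
  show ?thesis unfolding Gf_def
    by (intro L2_add c a Y2 M2 D2) (auto)
qed

lemma AE_U_XX: "AE u in P \<Otimes>\<^sub>M Qm. Xof (fst u) \<in> XX"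
proof -
  interpret Q: prob_space Qm by (rule Q_prob)
  have "AE w in distr (P \<Otimes>\<^sub>M Qm) P fst. Xof w \<in> XX"
    unfolding Q.distr_pair_fst by (rule XX_supp)
  then show ?thesis by (rule AE_distrD[rotated]) simp
qed

lemma GU: "integrable (P \<Otimes>\<^sub>M Qm) (\<lambda>u. (Gf (fst u))^2)"
proof -
  interpret Q: prob_space Qm by (rule Q_prob)
  have "integrable (distr (P \<Otimes>\<^sub>M Qm) P fst) (\<lambda>w. (Gf w)^2)"
    using Gf2 by (simp add: Q.distr_pair_fst)
  then show ?thesis by (subst (asm) integrable_distr_eq) auto
qed

lemma hs_bound:
  assumes eps: "\<forall>x\<in>XX. \<gamma> \<le> \<epsilon> x \<and> \<epsilon> x \<le> 1 - \<gamma>"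
  shows "AE u in P \<Otimes>\<^sub>M Qm. \<bar>hs p \<epsilon> u\<bar> \<le> Gf (fst u)"
  using AE_U_XX
proof eventually_elim
  case (elim u)
  obtain w r where u: "u = (w, r)" by (cases u)
  have e1: "\<gamma> \<le> \<epsilon> (Xof w)" and e2: "\<gamma> \<le> 1 - \<epsilon> (Xof w)" using eps elim u by auto
  have d1: "\<bar>(Ypot 1 w - m0 1 (Xof w)) / \<epsilon> (Xof w)\<bar> \<le> (\<bar>Ypot 1 w\<bar> + \<bar>m0 1 (Xof w)\<bar>) / \<gamma>"
  proof -
    have "\<bar>(Ypot 1 w - m0 1 (Xof w)) / \<epsilon> (Xof w)\<bar> = \<bar>Ypot 1 w - m0 1 (Xof w)\<bar> / \<epsilon> (Xof w)"
      using e1 gamma_pos by (simp add: abs_divide)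
    also have "\<dots> \<le> (\<bar>Ypot 1 w\<bar> + \<bar>m0 1 (Xof w)\<bar>) / \<epsilon> (Xof w)"
      using e1 gamma_pos by (intro divide_right_mono abs_triangle_ineq4) auto
    also have "\<dots> \<le> (\<bar>Ypot 1 w\<bar> + \<bar>m0 1 (Xof w)\<bar>) / \<gamma>"
      using e1 gamma_pos by (intro divide_left_mono) auto
    finally show ?thesis .
  qed
  have d0: "\<bar>(Ypot 0 w - m0 0 (Xof w)) / (1 - \<epsilon> (Xof w))\<bar> \<le> (\<bar>Ypot 0 w\<bar> + \<bar>m0 0 (Xof w)\<bar>) / \<gamma>"
  proof -
    have "\<bar>(Ypot 0 w - m0 0 (Xof w)) / (1 - \<epsilon> (Xof w))\<bar> = \<bar>Ypot 0 w - m0 0 (Xof w)\<bar> / (1 - \<epsilon> (Xof w))"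
      using e2 gamma_pos by (simp add: abs_divide)
    also have "\<dots> \<le> (\<bar>Ypot 0 w\<bar> + \<bar>m0 0 (Xof w)\<bar>) / (1 - \<epsilon> (Xof w))"
      using e2 gamma_pos by (intro divide_right_mono abs_triangle_ineq4) auto
    also have "\<dots> \<le> (\<bar>Ypot 0 w\<bar> + \<bar>m0 0 (Xof w)\<bar>) / \<gamma>"
      using e2 gamma_pos by (intro divide_left_mono) auto
    finally show ?thesis .
  qed
  have p1: "0 \<le> (\<bar>Ypot 1 w\<bar> + \<bar>m0 1 (Xof w)\<bar>) / \<gamma>" "0 \<le> (\<bar>Ypot 0 w\<bar> + \<bar>m0 0 (Xof w)\<bar>) / \<gamma>"
    using gamma_pos by auto
  show ?case unfolding u hs_eq H1_def H0_def Gf_def fst_conv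
    using d1 d0 p1 by (auto simp: abs_le_iff abs_if split: if_splits) 
qed


lemma H_meas[measurable]:
  assumes [measurable]: "\<epsilon> \<in> borel_measurable borel"
  shows "H1 \<epsilon> \<in> borel_measurable P" "H0 \<epsilon> \<in> borel_measurable P"
  unfolding H1_def H0_def by measurable

lemma fub:
  assumes pm[measurable]: "p \<in> borel_measurable borel" and em[measurable]: "\<epsilon> \<in> borel_measurable borel"
    and prng: "\<forall>x\<in>XX. 0 \<le> p x \<and> p x \<le> 1"
    and phim[measurable]: "\<phi> \<in> borel_measurable borel"
    and int: "integrable (P \<Otimes>\<^sub>M Qm) (\<lambda>u. \<phi> (hs p \<epsilon> u))"
  shows "(\<integral>u. \<phi> (hs p \<epsilon> u) \<partial>(P \<Otimes>\<^sub>M Qm))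
       = (\<integral>w. p (Xof w) * \<phi> (H1 \<epsilon> w) + (1 - p (Xof w)) * \<phi> (H0 \<epsilon> w) \<partial>P)"
proof -
  interpret pair_sigma_finite P Qm by (rule pair_PQ)
  interpret Q: prob_space Qm by (rule Q_prob)
  have "(\<integral>u. \<phi> (hs p \<epsilon> u) \<partial>(P \<Otimes>\<^sub>M Qm)) = (\<integral>w. (\<integral>r. \<phi> (hs p \<epsilon> (w, r)) \<partial>Qm) \<partial>P)"
    by (rule integral_fst'[OF int, symmetric])
  also have "\<dots> = (\<integral>w. p (Xof w) * \<phi> (H1 \<epsilon> w) + (1 - p (Xof w)) * \<phi> (H0 \<epsilon> w) \<partial>P)"
  proof (rule integral_cong_AE)
    have "(\<lambda>(w, r). \<phi> (hs p \<epsilon> (w, r))) \<in> borel_measurable (P \<Otimes>\<^sub>M Qm)"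
      by simp
    then show "(\<lambda>w. \<integral>r. \<phi> (hs p \<epsilon> (w, r)) \<partial>Qm) \<in> borel_measurable P"
      by (rule sigma_finite_measure.borel_measurable_lebesgue_integral[OF prob_space_imp_sigma_finite[OF Q_prob]])
    show "(\<lambda>w. p (Xof w) * \<phi> (H1 \<epsilon> w) + (1 - p (Xof w)) * \<phi> (H0 \<epsilon> w)) \<in> borel_measurable P"
      by measurable
    show "AE w in P. (\<integral>r. \<phi> (hs p \<epsilon> (w, r)) \<partial>Qm) = p (Xof w) * \<phi> (H1 \<epsilon> w) + (1 - p (Xof w)) * \<phi> (H0 \<epsilon> w)"
      using XX_supp
    proof eventually_elim
      case (elim w)
      have "(\<integral>r. \<phi> (hs p \<epsilon> (w, r)) \<partial>Qm) = (\<integral>r. (if r \<le> p (Xof w) then \<phi> (H1 \<epsilon> w) else \<phi> (H0 \<epsilon> w)) \<partial>Qm)"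
        by (simp add: hs_eq if_distrib)
      also have "\<dots> = p (Xof w) * \<phi> (H1 \<epsilon> w) + (1 - p (Xof w)) * \<phi> (H0 \<epsilon> w)"
        using prng elim by (intro inner) auto
      finally show ?case .
    qed
  qed
  finally show ?thesis .
qed

lemma hs_int:
  assumes pm[measurable]: "p \<in> borel_measurable borel" and em[measurable]: "\<epsilon> \<in> borel_measurable borel"
    and eps: "\<forall>x\<in>XX. \<gamma> \<le> \<epsilon> x \<and> \<epsilon> x \<le> 1 - \<gamma>"
  shows "integrable (P \<Otimes>\<^sub>M Qm) (\<lambda>u. (hs p \<epsilon> u)^2)" "integrable (P \<Otimes>\<^sub>M Qm) (hs p \<epsilon>)"
proof -
  interpret Q: prob_space Qm by (rule Q_prob)
  interpret PQ: prob_space "P \<Otimes>\<^sub>M Qm" by (intro prob_space_pair P_prob Q_prob)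
  show i2: "integrable (P \<Otimes>\<^sub>M Qm) (\<lambda>u. (hs p \<epsilon> u)^2)"
  proof (rule Bochner_Integration.integrable_bound[OF GU])
    show "(\<lambda>u. (hs p \<epsilon> u)^2) \<in> borel_measurable (P \<Otimes>\<^sub>M Qm)" by measurable
    show "AE u in P \<Otimes>\<^sub>M Qm. norm ((hs p \<epsilon> u)^2) \<le> norm ((Gf (fst u))^2)"
      using hs_bound[OF eps, of p]
    proof eventually_elim
      case (elim u)
      then have "(hs p \<epsilon> u)^2 \<le> (Gf (fst u))^2"
        by (metis abs_ge_zero abs_le_square_iff abs_of_nonneg order_trans)
      then show ?case by simp
    qed
  qed
  show "integrable (P \<Otimes>\<^sub>M Qm) (hs p \<epsilon>)"
    by (rule PQ.square_integrable_imp_integrable[OF _ i2]) simp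
qed

definition ak :: "('x \<Rightarrow> real) \<Rightarrow> ('x \<Rightarrow> real) \<Rightarrow> 'x \<Rightarrow> real" where "ak p \<epsilon> x = indicator XX x * p x / \<epsilon> x"
definition bk :: "('x \<Rightarrow> real) \<Rightarrow> ('x \<Rightarrow> real) \<Rightarrow> 'x \<Rightarrow> real" where "bk p \<epsilon> x = indicator XX x * (1 - p x) / (1 - \<epsilon> x)"
definition a2k :: "('x \<Rightarrow> real) \<Rightarrow> ('x \<Rightarrow> real) \<Rightarrow> 'x \<Rightarrow> real" where "a2k p \<epsilon> x = indicator XX x * p x / (\<epsilon> x)^2"
definition b2k :: "('x \<Rightarrow> real) \<Rightarrow> ('x \<Rightarrow> real) \<Rightarrow> 'x \<Rightarrow> real" where "b2k p \<epsilon> x = indicator XX x * (1 - p x) / (1 - \<epsilon> x)^2"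

lemma k_meas[measurable]:
  assumes [measurable]: "p \<in> borel_measurable borel" "\<epsilon> \<in> borel_measurable borel"
  shows "ak p \<epsilon> \<in> borel_measurable borel" "bk p \<epsilon> \<in> borel_measurable borel"
    "a2k p \<epsilon> \<in> borel_measurable borel" "b2k p \<epsilon> \<in> borel_measurable borel"
proof -
  note I = borel_measurable_divide borel_measurable_times borel_measurable_indicator XX_sets assms
      borel_measurable_diff borel_measurable_power borel_measurable_const
  show "ak p \<epsilon> \<in> borel_measurable borel" unfolding ak_def by (intro I)
  show "bk p \<epsilon> \<in> borel_measurable borel" unfolding bk_def by (intro I)
  show "a2k p \<epsilon> \<in> borel_measurable borel" unfolding a2k_def by (intro I)
  show "b2k p \<epsilon> \<in> borel_measurable borel" unfolding b2k_def by (intro I)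
qed

lemma k_bound:
  assumes prng: "\<forall>x\<in>XX. 0 \<le> p x \<and> p x \<le> 1"
    and eps: "\<forall>x\<in>XX. \<gamma> \<le> \<epsilon> x \<and> \<epsilon> x \<le> 1 - \<gamma>"
  shows "\<bar>ak p \<epsilon> x\<bar> \<le> 1 / \<gamma>" "\<bar>bk p \<epsilon> x\<bar> \<le> 1 / \<gamma>"
    "\<bar>a2k p \<epsilon> x\<bar> \<le> 1 / \<gamma>^2" "\<bar>b2k p \<epsilon> x\<bar> \<le> 1 / \<gamma>^2"
proof -
  have g: "0 < \<gamma>" by (rule gamma_pos)
  show "\<bar>ak p \<epsilon> x\<bar> \<le> 1 / \<gamma>"
  proof (cases "x \<in> XX")
    case True
    then have "0 \<le> p x" "p x \<le> 1" "\<gamma> \<le> \<epsilon> x" using prng eps by auto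
    then have "p x / \<epsilon> x \<le> 1 / \<gamma>" using g by (intro frac_le) auto
    then show ?thesis using True \<open>0 \<le> p x\<close> \<open>\<gamma> \<le> \<epsilon> x\<close> g by (simp add: ak_def)
  qed (use g in \<open>simp add: ak_def\<close>)
  show "\<bar>bk p \<epsilon> x\<bar> \<le> 1 / \<gamma>"
  proof (cases "x \<in> XX")
    case True
    then have "0 \<le> 1 - p x" "1 - p x \<le> 1" "\<gamma> \<le> 1 - \<epsilon> x" using prng eps by auto
    then have "(1 - p x) / (1 - \<epsilon> x) \<le> 1 / \<gamma>" using g by (intro frac_le) auto
    then show ?thesis using True \<open>0 \<le> 1 - p x\<close> \<open>\<gamma> \<le> 1 - \<epsilon> x\<close> g by (simp add: bk_def)
  qed (use g in \<open>simp add: bk_def\<close>)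
  show "\<bar>a2k p \<epsilon> x\<bar> \<le> 1 / \<gamma>^2"
  proof (cases "x \<in> XX")
    case True
    then have "0 \<le> p x" "p x \<le> 1" "\<gamma> \<le> \<epsilon> x" using prng eps by auto
    moreover have "\<gamma>^2 \<le> (\<epsilon> x)^2" using \<open>\<gamma> \<le> \<epsilon> x\<close> g by (intro power_mono) auto
    ultimately have "p x / (\<epsilon> x)^2 \<le> 1 / \<gamma>^2" using g by (intro frac_le) auto
    then show ?thesis using True \<open>0 \<le> p x\<close> by (simp add: a2k_def)
  qed (use g in \<open>simp add: a2k_def\<close>)
  show "\<bar>b2k p \<epsilon> x\<bar> \<le> 1 / \<gamma>^2"
  proof (cases "x \<in> XX")
    case True
    then have "0 \<le> 1 - p x" "1 - p x \<le> 1" "\<gamma> \<le> 1 - \<epsilon> x" using prng eps by auto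
    moreover have "\<gamma>^2 \<le> (1 - \<epsilon> x)^2" using \<open>\<gamma> \<le> 1 - \<epsilon> x\<close> g by (intro power_mono) auto
    ultimately have "(1 - p x) / (1 - \<epsilon> x)^2 \<le> 1 / \<gamma>^2" using g by (intro frac_le) auto
    then show ?thesis using True \<open>0 \<le> 1 - p x\<close> by (simp add: b2k_def)
  qed (use g in \<open>simp add: b2k_def\<close>)
qed


lemma alg1:
  fixes p e D R1 R0 :: real
  assumes "e \<noteq> 0" "1 - e \<noteq> 0"
  shows "p * (D + R1 / e) + (1 - p) * (D - R0 / (1 - e)) = D + (p / e * R1 - (1 - p) / (1 - e) * R0)"
  using assms by (simp add: field_simps)

lemma alg2:
  fixes p e D R1 R0 :: real
  assumes "e \<noteq> 0" "1 - e \<noteq> 0"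
  shows "p * (D + R1 / e)^2 + (1 - p) * (D - R0 / (1 - e))^2
    = D^2 + ((2 * D * (p / e)) * R1 - (2 * D * ((1 - p) / (1 - e))) * R0
       + (p / e^2 * R1^2 + (1 - p) / (1 - e)^2 * R0^2))"
proof -
  have "p * (D + R1 / e)^2 + (1 - p) * (D - R0 / (1 - e))^2
      = D^2 + (2 * D * p * (R1 / e) - 2 * D * (1 - p) * (R0 / (1 - e)) + (p * (R1 / e)^2 + (1 - p) * (R0 / (1 - e))^2))"
  proof -
    have g: "\<And>A B. p * (D + A)^2 + (1 - p) * (D - B)^2 = D^2 + (2 * D * p * A - 2 * D * (1 - p) * B + (p * A^2 + (1 - p) * B^2))"
      by (simp add: power2_eq_square algebra_simps)
    show ?thesis by (rule g)
  qed
  also have "\<dots> = D^2 + ((2 * D * (p / e)) * R1 - (2 * D * ((1 - p) / (1 - e))) * R0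
       + (p / e^2 * R1^2 + (1 - p) / (1 - e)^2 * R0^2))"
  proof -
    have f1: "2 * D * p * (R1 / e) = (2 * D * (p / e)) * R1" by simp
    have f2': "\<And>q u. 2 * D * q * (R0 / u) = (2 * D * (q / u)) * R0" by simp
    have f2: "2 * D * (1 - p) * (R0 / (1 - e)) = (2 * D * ((1 - p) / (1 - e))) * R0" by (rule f2')
    have f3: "p * (R1 / e)^2 = p / e^2 * R1^2" by (simp add: power_divide)
    have f4: "(1 - p) * (R0 / (1 - e))^2 = (1 - p) / (1 - e)^2 * R0^2" by (simp add: power_divide)
    show ?thesis by (simp only: f1 f2 f3 f4)
  qed
  finally show ?thesis .
qed

lemma hs_mean:
  assumes pm[measurable]: "p \<in> borel_measurable borel" and em[measurable]: "\<epsilon> \<in> borel_measurable borel"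
    and prng: "\<forall>x\<in>XX. 0 \<le> p x \<and> p x \<le> 1"
    and eps: "\<forall>x\<in>XX. \<gamma> \<le> \<epsilon> x \<and> \<epsilon> x \<le> 1 - \<gamma>"
  shows "(\<integral>u. hs p \<epsilon> u \<partial>(P \<Otimes>\<^sub>M Qm)) = 0"
proof -
  have g: "0 < \<gamma>" by (rule gamma_pos)
  have [measurable]: "m0 1 \<in> borel_measurable borel" "m0 0 \<in> borel_measurable borel" by (auto intro: mm)
  have "(\<integral>u. hs p \<epsilon> u \<partial>(P \<Otimes>\<^sub>M Qm)) = (\<integral>w. p (Xof w) * H1 \<epsilon> w + (1 - p (Xof w)) * H0 \<epsilon> w \<partial>P)"
    using fub[OF pm em prng, of "\<lambda>x. x"] hs_int[OF pm em eps] by simp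
  also have "\<dots> = (\<integral>w. Dx (Xof w) + (ak p \<epsilon> (Xof w) * (Ypot 1 w - m0 1 (Xof w))
                          - bk p \<epsilon> (Xof w) * (Ypot 0 w - m0 0 (Xof w))) \<partial>P)"
  proof (rule integral_cong_AE)
    show "AE w in P. p (Xof w) * H1 \<epsilon> w + (1 - p (Xof w)) * H0 \<epsilon> w =
        Dx (Xof w) + (ak p \<epsilon> (Xof w) * (Ypot 1 w - m0 1 (Xof w)) - bk p \<epsilon> (Xof w) * (Ypot 0 w - m0 0 (Xof w)))"
      using XX_supp
    proof eventually_elim
      case (elim w)
      have "\<epsilon> (Xof w) \<noteq> 0" "1 - \<epsilon> (Xof w) \<noteq> 0" using eps elim g by fastforce+
      then show ?case unfolding H1_def H0_def ak_def bk_def using elim by (simp add: alg1)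
    qed
  qed measurable
  also have "\<dots> = (\<integral>w. Dx (Xof w) \<partial>P) + ((\<integral>w. ak p \<epsilon> (Xof w) * (Ypot 1 w - m0 1 (Xof w)) \<partial>P)
                          - (\<integral>w. bk p \<epsilon> (Xof w) * (Ypot 0 w - m0 0 (Xof w)) \<partial>P))"
  proof -
    have ia: "integrable P (\<lambda>w. ak p \<epsilon> (Xof w) * Ypot 1 w)"
      by (rule L2_bounded_mult[where K="1/\<gamma>"]) (use mean_m(3)[of 1] k_bound[OF prng eps] in auto)
    have ib: "integrable P (\<lambda>w. bk p \<epsilon> (Xof w) * Ypot 0 w)"
      by (rule L2_bounded_mult[where K="1/\<gamma>"]) (use mean_m(3)[of 0] k_bound[OF prng eps] in auto)
    show ?thesis using KLz(1)[OF _ _ ia] KLz(1)[OF _ _ ib] D_mean(2)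
      by (simp add: Bochner_Integration.integral_add Bochner_Integration.integral_diff)
  qed
  also have "\<dots> = 0"
  proof -
    have ia: "integrable P (\<lambda>w. ak p \<epsilon> (Xof w) * Ypot 1 w)"
      by (rule L2_bounded_mult[where K="1/\<gamma>"]) (use mean_m(3)[of 1] k_bound[OF prng eps] in auto)
    have ib: "integrable P (\<lambda>w. bk p \<epsilon> (Xof w) * Ypot 0 w)"
      by (rule L2_bounded_mult[where K="1/\<gamma>"]) (use mean_m(3)[of 0] k_bound[OF prng eps] in auto)
    show ?thesis using KLz(2)[OF _ _ ia] KLz(2)[OF _ _ ib] D_mean(1) by simp
  qed
  finally show ?thesis .
qed


lemma hs_var:
  assumes pm[measurable]: "p \<in> borel_measurable borel" and em[measurable]: "\<epsilon> \<in> borel_measurable borel"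
    and prng: "\<forall>x\<in>XX. 0 \<le> p x \<and> p x \<le> 1"
    and eps: "\<forall>x\<in>XX. \<gamma> \<le> \<epsilon> x \<and> \<epsilon> x \<le> 1 - \<gamma>"
  shows "(\<integral>u. (hs p \<epsilon> u)^2 \<partial>(P \<Otimes>\<^sub>M Qm))
     = (\<integral>w. (Dx (Xof w))^2 + (a2k p \<epsilon> (Xof w) * v0 1 (Xof w) + b2k p \<epsilon> (Xof w) * v0 0 (Xof w)) \<partial>P)"
proof -
  have g: "0 < \<gamma>" by (rule gamma_pos)
  have [measurable]: "m0 1 \<in> borel_measurable borel" "m0 0 \<in> borel_measurable borel" by (auto intro: mm)
  define ka where "ka x = 2 * Dx x * ak p \<epsilon> x" for x
  define kb where "kb x = 2 * Dx x * bk p \<epsilon> x" for x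
  have [measurable]: "ka \<in> borel_measurable borel" "kb \<in> borel_measurable borel"
    unfolding ka_def kb_def by measurable
  have DY: "integrable P (\<lambda>w. Dx (Xof w) * Ypot z w)" if "z \<in> {0,1}" for z
    by (rule L2_prod) (use D2 Y2[OF that] in auto)
  have ia: "integrable P (\<lambda>w. ka (Xof w) * Ypot 1 w)"
  proof -
    have "integrable P (\<lambda>w. ak p \<epsilon> (Xof w) * (2 * (Dx (Xof w) * Ypot 1 w)))"
      by (rule L2_bounded_mult[where K="1/\<gamma>"]) (use DY[of 1] k_bound[OF prng eps] in auto)
    then show ?thesis by (simp add: ka_def mult_ac)
  qed
  have ib: "integrable P (\<lambda>w. kb (Xof w) * Ypot 0 w)"
  proof -
    have "integrable P (\<lambda>w. bk p \<epsilon> (Xof w) * (2 * (Dx (Xof w) * Ypot 0 w)))"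
      by (rule L2_bounded_mult[where K="1/\<gamma>"]) (use DY[of 0] k_bound[OF prng eps] in auto)
    then show ?thesis by (simp add: kb_def mult_ac)
  qed
  note KA = KLz[OF _ _ ia, simplified] and KB = KLz[OF _ _ ib, simplified]
  note VA = KLv[of 1 "a2k p \<epsilon>" "1/\<gamma>^2", OF _ _ k_bound(3)[OF prng eps], simplified]
  note VB = KLv[of 0 "b2k p \<epsilon>" "1/\<gamma>^2", OF _ _ k_bound(4)[OF prng eps], simplified]
  have "(\<integral>u. (hs p \<epsilon> u)^2 \<partial>(P \<Otimes>\<^sub>M Qm)) = (\<integral>w. p (Xof w) * (H1 \<epsilon> w)^2 + (1 - p (Xof w)) * (H0 \<epsilon> w)^2 \<partial>P)"
    using fub[OF pm em prng, of "\<lambda>x. x^2"] hs_int[OF pm em eps] by simp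
  also have "\<dots> = (\<integral>w. (Dx (Xof w))^2 + ((ka (Xof w) * (Ypot 1 w - m0 1 (Xof w))
                    - kb (Xof w) * (Ypot 0 w - m0 0 (Xof w)))
                    + (a2k p \<epsilon> (Xof w) * (Ypot 1 w - m0 1 (Xof w))^2 + b2k p \<epsilon> (Xof w) * (Ypot 0 w - m0 0 (Xof w))^2)) \<partial>P)"
  proof (rule integral_cong_AE)
    show "AE w in P. p (Xof w) * (H1 \<epsilon> w)^2 + (1 - p (Xof w)) * (H0 \<epsilon> w)^2 =
        (Dx (Xof w))^2 + ((ka (Xof w) * (Ypot 1 w - m0 1 (Xof w))
                    - kb (Xof w) * (Ypot 0 w - m0 0 (Xof w)))
                    + (a2k p \<epsilon> (Xof w) * (Ypot 1 w - m0 1 (Xof w))^2 + b2k p \<epsilon> (Xof w) * (Ypot 0 w - m0 0 (Xof w))^2))"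
      using XX_supp
    proof eventually_elim
      case (elim w)
      have "\<epsilon> (Xof w) \<noteq> 0" "1 - \<epsilon> (Xof w) \<noteq> 0" using eps elim g by fastforce+
      then show ?case unfolding H1_def H0_def ka_def kb_def ak_def bk_def a2k_def b2k_def
        using elim by (simp add: alg2)
    qed
  qed measurable
  also have "\<dots> = (\<integral>w. (Dx (Xof w))^2 \<partial>P) + (((\<integral>w. ka (Xof w) * (Ypot 1 w - m0 1 (Xof w)) \<partial>P)
                    - (\<integral>w. kb (Xof w) * (Ypot 0 w - m0 0 (Xof w)) \<partial>P))
                    + ((\<integral>w. a2k p \<epsilon> (Xof w) * (Ypot 1 w - m0 1 (Xof w))^2 \<partial>P)
                     + (\<integral>w. b2k p \<epsilon> (Xof w) * (Ypot 0 w - m0 0 (Xof w))^2 \<partial>P)))"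
    using KA(1) KB(1) VA(1) VB(1) D2
    by (simp add: Bochner_Integration.integral_add Bochner_Integration.integral_diff)
  also have "\<dots> = (\<integral>w. (Dx (Xof w))^2 \<partial>P) + ((\<integral>w. a2k p \<epsilon> (Xof w) * v0 1 (Xof w) \<partial>P)
                     + (\<integral>w. b2k p \<epsilon> (Xof w) * v0 0 (Xof w) \<partial>P))"
    using KA(2) KB(2) VA(2) VB(2) by simp
  also have "\<dots> = (\<integral>w. (Dx (Xof w))^2 + (a2k p \<epsilon> (Xof w) * v0 1 (Xof w) + b2k p \<epsilon> (Xof w) * v0 0 (Xof w)) \<partial>P)"
    using VA(3) VB(3) D2
    by (simp add: Bochner_Integration.integral_add)
  finally show ?thesis .
qed


definition Wf :: "('x \<Rightarrow> real) \<Rightarrow> ('x \<times> real \<times> real) \<Rightarrow> real" where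
  "Wf \<epsilon> w = (Dx (Xof w))^2 + (indicator XX (Xof w) * v0 1 (Xof w) / \<epsilon> (Xof w)
      + indicator XX (Xof w) * v0 0 (Xof w) / (1 - \<epsilon> (Xof w)))"

lemma convex_range:
  fixes w y :: "nat \<Rightarrow> real"
  assumes "(\<Sum>t<T. w t) = 1" "\<forall>t<T. 0 \<le> w t" "\<forall>t<T. a \<le> y t \<and> y t \<le> b"
  shows "a \<le> (\<Sum>t<T. w t * y t)" "(\<Sum>t<T. w t * y t) \<le> b"
proof -
  have "a = (\<Sum>t<T. w t * a)" using assms(1) by (simp add: sum_distrib_right[symmetric])
  also have "\<dots> \<le> (\<Sum>t<T. w t * y t)" using assms by (intro sum_mono mult_left_mono) auto
  finally show "a \<le> (\<Sum>t<T. w t * y t)" .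
  have "(\<Sum>t<T. w t * y t) \<le> (\<Sum>t<T. w t * b)" using assms by (intro sum_mono mult_left_mono) auto
  also have "\<dots> = b" using assms(1) by (simp add: sum_distrib_right[symmetric])
  finally show "(\<Sum>t<T. w t * y t) \<le> b" .
qed

lemma sum_lin3:
  fixes w c d :: "nat \<Rightarrow> real"
  shows "(\<Sum>t\<in>I. w t * (a + (c t * A + d t * B))) = (\<Sum>t\<in>I. w t) * a + ((\<Sum>t\<in>I. w t * c t) * A + (\<Sum>t\<in>I. w t * d t) * B)"
  by (simp add: sum.distrib sum_distrib_right sum_distrib_left algebra_simps)

lemma var_avg:
  fixes T :: nat and wt :: "nat \<Rightarrow> real" and e :: "nat \<Rightarrow> 'x \<Rightarrow> real"
  assumes wpos: "\<forall>t<T. 0 \<le> wt t" and wsum: "(\<Sum>t<T. wt t) = 1"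
    and em: "\<forall>t<T. e t \<in> borel_measurable borel"
    and erng: "\<forall>t<T. \<forall>x\<in>XX. \<gamma> \<le> e t x \<and> e t x \<le> 1 - \<gamma>"
  defines "\<epsilon> \<equiv> (\<lambda>x. \<Sum>t<T. wt t * e t x)"
  shows "(\<Sum>t<T. wt t * (\<integral>u. (hs (e t) \<epsilon> u)^2 \<partial>(P \<Otimes>\<^sub>M Qm))) = (\<integral>w. Wf \<epsilon> w \<partial>P)"
    "\<forall>x\<in>XX. \<gamma> \<le> \<epsilon> x \<and> \<epsilon> x \<le> 1 - \<gamma>"
proof -
  have g: "0 < \<gamma>" by (rule gamma_pos)
  have epm[measurable]: "\<epsilon> \<in> borel_measurable borel"
    unfolding \<epsilon>_def using em by (intro borel_measurable_sum borel_measurable_times) auto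
  show eps: "\<forall>x\<in>XX. \<gamma> \<le> \<epsilon> x \<and> \<epsilon> x \<le> 1 - \<gamma>"
  proof
    fix x assume x: "x \<in> XX"
    show "\<gamma> \<le> \<epsilon> x \<and> \<epsilon> x \<le> 1 - \<gamma>"
      unfolding \<epsilon>_def using convex_range[OF wsum wpos, of \<gamma> "\<lambda>t. e t x" "1 - \<gamma>"] erng x by auto
  qed
  have prng: "\<forall>x\<in>XX. 0 \<le> e t x \<and> e t x \<le> 1" if "t < T" for t
    using erng that g by force
  have [measurable]: "v0 1 \<in> borel_measurable borel" "v0 0 \<in> borel_measurable borel" by (auto intro: vm)
  define F where "F t w = (Dx (Xof w))^2 + (a2k (e t) \<epsilon> (Xof w) * v0 1 (Xof w) + b2k (e t) \<epsilon> (Xof w) * v0 0 (Xof w))" for t w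
  have Fint: "integrable P (F t)" if t: "t < T" for t
  proof -
    have [measurable]: "e t \<in> borel_measurable borel" using em t by auto
    note VA = KLv(3)[of 1 "a2k (e t) \<epsilon>" "1/\<gamma>^2", OF _ _ k_bound(3)[OF prng[OF t] eps]]
    note VB = KLv(3)[of 0 "b2k (e t) \<epsilon>" "1/\<gamma>^2", OF _ _ k_bound(4)[OF prng[OF t] eps]]
    show ?thesis unfolding F_def using VA VB D2 by auto
  qed
  have "(\<Sum>t<T. wt t * (\<integral>u. (hs (e t) \<epsilon> u)^2 \<partial>(P \<Otimes>\<^sub>M Qm))) = (\<Sum>t<T. wt t * (\<integral>w. F t w \<partial>P))"
  proof (rule sum.cong[OF refl])
    fix t assume "t \<in> {..<T}"
    then have t: "t < T" by simp
    have [measurable]: "e t \<in> borel_measurable borel" using em t by auto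
    show "wt t * (\<integral>u. (hs (e t) \<epsilon> u)^2 \<partial>(P \<Otimes>\<^sub>M Qm)) = wt t * (\<integral>w. F t w \<partial>P)"
      unfolding F_def by (subst hs_var[OF _ epm prng[OF t] eps]) auto
  qed
  also have "\<dots> = (\<Sum>t<T. (\<integral>w. wt t * F t w \<partial>P))" by simp
  also have "\<dots> = (\<integral>w. (\<Sum>t<T. wt t * F t w) \<partial>P)"
    by (rule Bochner_Integration.integral_sum[symmetric]) (use Fint in auto)
  also have "\<dots> = (\<integral>w. Wf \<epsilon> w \<partial>P)"
  proof (rule Bochner_Integration.integral_cong[OF refl])
    fix w :: "'x \<times> real \<times> real"
    let ?x = "Xof w"
    show "(\<Sum>t<T. wt t * F t w) = Wf \<epsilon> w"
    proof (cases "?x \<in> XX")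
      case False
      then show ?thesis unfolding F_def Wf_def a2k_def b2k_def
        by (simp add: sum_distrib_right[symmetric] wsum)
    next
      case True
      have e0: "\<epsilon> ?x \<noteq> 0" "1 - \<epsilon> ?x \<noteq> 0" using eps True g by fastforce+
      have s1: "(\<Sum>t<T. wt t * e t ?x) = \<epsilon> ?x" by (simp add: \<epsilon>_def)
      have s2: "(\<Sum>t<T. wt t * (1 - e t ?x)) = 1 - \<epsilon> ?x"
        by (simp add: \<epsilon>_def right_diff_distrib sum_subtractf wsum)
      define A where "A = v0 1 ?x / (\<epsilon> ?x)^2"
      define B where "B = v0 0 ?x / (1 - \<epsilon> ?x)^2"
      have Fx: "F t w = (Dx ?x)^2 + (e t ?x * A + (1 - e t ?x) * B)" for t
        unfolding F_def a2k_def b2k_def A_def B_def using True by simp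
      have "(\<Sum>t<T. wt t * F t w) = (\<Sum>t<T. wt t) * (Dx ?x)^2
          + ((\<Sum>t<T. wt t * e t ?x) * A + (\<Sum>t<T. wt t * (1 - e t ?x)) * B)"
        unfolding Fx by (rule sum_lin3)
      also have "\<dots> = Wf \<epsilon> w"
        unfolding s1 s2 wsum Wf_def A_def B_def using True e0 by (simp add: power2_eq_square)
      finally show ?thesis .
    qed
  qed
  finally show "(\<Sum>t<T. wt t * (\<integral>u. (hs (e t) \<epsilon> u)^2 \<partial>(P \<Otimes>\<^sub>M Qm))) = (\<integral>w. Wf \<epsilon> w \<partial>P)" .
qed


lemma Wf_meas[measurable]:
  assumes [measurable]: "\<epsilon> \<in> borel_measurable borel"
  shows "Wf \<epsilon> \<in> borel_measurable P"
proof -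
  have [measurable]: "v0 1 \<in> borel_measurable borel" "v0 0 \<in> borel_measurable borel" by (auto intro: vm)
  have [measurable]: "(\<lambda>w. indicator XX (Xof w) :: real) \<in> borel_measurable P"
    using measurable_compose[OF Xm borel_measurable_indicator[OF XX_sets]] by (simp add: comp_def)
  show ?thesis unfolding Wf_def by measurable
qed

lemma Wf_bound:
  assumes eps: "\<forall>x\<in>XX. \<gamma> \<le> \<epsilon> x \<and> \<epsilon> x \<le> 1 - \<gamma>"
  shows "\<bar>Wf \<epsilon> w\<bar> \<le> (Dx (Xof w))^2 + (\<bar>v0 1 (Xof w)\<bar> / \<gamma> + \<bar>v0 0 (Xof w)\<bar> / \<gamma>)"
proof (cases "Xof w \<in> XX")
  case False
  then show ?thesis unfolding Wf_def using gamma_pos by simp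
next
  case True
  have g: "0 < \<gamma>" by (rule gamma_pos)
  have e1: "\<gamma> \<le> \<epsilon> (Xof w)" and e2: "\<gamma> \<le> 1 - \<epsilon> (Xof w)" using eps True by auto
  have a: "\<bar>v0 1 (Xof w) / \<epsilon> (Xof w)\<bar> \<le> \<bar>v0 1 (Xof w)\<bar> / \<gamma>"
    using e1 g by (simp add: abs_divide divide_left_mono)
  have b: "\<bar>v0 0 (Xof w) / (1 - \<epsilon> (Xof w))\<bar> \<le> \<bar>v0 0 (Xof w)\<bar> / \<gamma>"
    using e2 g by (simp add: abs_divide divide_left_mono)
  have "\<bar>Wf \<epsilon> w\<bar> \<le> (Dx (Xof w))^2 + (\<bar>v0 1 (Xof w) / \<epsilon> (Xof w)\<bar> + \<bar>v0 0 (Xof w) / (1 - \<epsilon> (Xof w))\<bar>)"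
    unfolding Wf_def using True by (simp add: abs_triangle_ineq order_trans[OF abs_triangle_ineq] add_mono)
  also have "\<dots> \<le> (Dx (Xof w))^2 + (\<bar>v0 1 (Xof w)\<bar> / \<gamma> + \<bar>v0 0 (Xof w)\<bar> / \<gamma>)"
    using a b by simp
  finally show ?thesis .
qed

lemma var_lim:
  assumes em[measurable]: "\<And>n. \<epsilon> n \<in> borel_measurable borel"
    and erng: "\<And>n. \<forall>x\<in>XX. \<gamma> \<le> \<epsilon> n x \<and> \<epsilon> n x \<le> 1 - \<gamma>"
    and lim: "\<And>x. x \<in> XX \<Longrightarrow> (\<lambda>n. \<epsilon> n x) \<longlonglongrightarrow> e1 x"
    and e1m[measurable]: "e1 \<in> borel_measurable borel"
    and e1rng: "\<forall>x\<in>XX. \<gamma> \<le> e1 x \<and> e1 x \<le> 1 - \<gamma>"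
  shows "(\<lambda>n. \<integral>w. Wf (\<epsilon> n) w \<partial>P) \<longlonglongrightarrow> (\<integral>w. Wf e1 w \<partial>P)"
proof (rule integral_dominated_convergence[where w="\<lambda>w. (Dx (Xof w))^2 + (\<bar>v0 1 (Xof w)\<bar> / \<gamma> + \<bar>v0 0 (Xof w)\<bar> / \<gamma>)"])
  show "integrable P (\<lambda>w. (Dx (Xof w))^2 + (\<bar>v0 1 (Xof w)\<bar> / \<gamma> + \<bar>v0 0 (Xof w)\<bar> / \<gamma>))"
    using D2 vint[of 1] vint[of 0] by auto
  show "AE w in P. (\<lambda>n. Wf (\<epsilon> n) w) \<longlonglongrightarrow> Wf e1 w"
  proof (rule AE_I2)
    fix w
    show "(\<lambda>n. Wf (\<epsilon> n) w) \<longlonglongrightarrow> Wf e1 w"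
    proof (cases "Xof w \<in> XX")
      case False
      then show ?thesis unfolding Wf_def by simp
    next
      case True
      have "e1 (Xof w) \<noteq> 0" "1 - e1 (Xof w) \<noteq> 0" using e1rng True gamma_pos by fastforce+
      then show ?thesis unfolding Wf_def using True
        by (intro tendsto_intros lim) auto
    qed
  qed
  show "AE w in P. norm (Wf (\<epsilon> n) w) \<le> (Dx (Xof w))^2 + (\<bar>v0 1 (Xof w)\<bar> / \<gamma> + \<bar>v0 0 (Xof w)\<bar> / \<gamma>)" for n
    using Wf_bound[OF erng[of n]] by simp
qed auto

end


lemma char_distr_div:
  assumes fm: "f \<in> borel_measurable M"
  shows "char (distr M borel (\<lambda>u. f u / c)) s = char (distr M borel f) (s / c)"
proof -
  have m: "(\<lambda>u. f u / c) \<in> borel_measurable M" using fm by measurable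
  have "char (distr M borel (\<lambda>u. f u / c)) s = (\<integral>u. iexp (s * (f u / c)) \<partial>M)"
    unfolding char_def by (rule integral_distr[OF m]) simp
  also have "\<dots> = (\<integral>u. iexp ((s / c) * f u) \<partial>M)" by simp
  also have "\<dots> = char (distr M borel f) (s / c)"
    unfolding char_def by (rule integral_distr[OF fm, symmetric]) simp
  finally show ?thesis .
qed

lemma sq_int_from_powr:
  fixes Y :: "'a \<Rightarrow> real"
  assumes q: "q > 2" and int: "integrable M (\<lambda>w. \<bar>Y w\<bar> powr q)" and Ym: "Y \<in> borel_measurable M"
    and fin: "finite_measure M"
  shows "integrable M (\<lambda>w. (Y w)^2)"
proof (rule Bochner_Integration.integrable_bound[where f="\<lambda>w. 1 + \<bar>Y w\<bar> powr q"])
  interpret finite_measure M by (rule fin)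
  show "integrable M (\<lambda>w. 1 + \<bar>Y w\<bar> powr q)" using int by auto
  show "(\<lambda>w. (Y w)^2) \<in> borel_measurable M" using Ym by measurable
  show "AE w in M. norm ((Y w)^2) \<le> norm (1 + \<bar>Y w\<bar> powr q)"
  proof (rule AE_I2)
    fix w
    have "(Y w)^2 \<le> 1 + \<bar>Y w\<bar> powr q"
    proof (cases "\<bar>Y w\<bar> \<le> 1")
      case True
      then have "(Y w)^2 \<le> 1"
        by (metis abs_ge_zero abs_le_square_iff abs_one one_power2 power2_abs)
      then show ?thesis by (smt (verit) powr_ge_zero)
    next
      case False
      then have "(Y w)^2 = \<bar>Y w\<bar> powr (real 2)"
        by (subst powr_realpow) auto
      also have "\<dots> \<le> \<bar>Y w\<bar> powr q" using False q by (intro powr_mono) auto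
      finally show ?thesis by simp
    qed
    then show "norm ((Y w)^2) \<le> norm (1 + \<bar>Y w\<bar> powr q)" by simp
  qed
qed

lemma batch_index_Sigma: "batch_index T Nt = Sigma {..<T} (\<lambda>t. {..<Nt t})"
  unfolding batch_index_def by auto

lemma batch_index_finite: "finite (batch_index T Nt)"
  unfolding batch_index_Sigma by auto

lemma batch_index_card: "card (batch_index T Nt) = (\<Sum>t<T. Nt t)"
  unfolding batch_index_Sigma by (simp add: card_SigmaI)

lemma sum_batch_index:
  "(\<Sum>j\<in>batch_index T Nt. g (fst j)) = (\<Sum>t<T. real (Nt t) * g t)"
proof -
  have "(\<Sum>j\<in>batch_index T Nt. g (fst j)) = (\<Sum>(t, i)\<in>Sigma {..<T} (\<lambda>t. {..<Nt t}). g t)"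
    unfolding batch_index_Sigma by (rule sum.cong) auto
  also have "\<dots> = (\<Sum>t<T. \<Sum>i<Nt t. g t)"
    by (rule sum.Sigma[symmetric]) auto
  also have "\<dots> = (\<Sum>t<T. real (Nt t) * g t)" by simp
  finally show ?thesis .
qed

theorem corollary1:
  fixes P :: "((real ^ 'd::finite) \<times> real \<times> real) measure"
    and XX :: "(real ^ 'd) set"
    and T :: nat
    and Nt :: "nat \<Rightarrow> nat \<Rightarrow> nat"
    and \<kappa> :: "nat \<Rightarrow> real"
    and e :: "nat \<Rightarrow> real ^ 'd \<Rightarrow> real"
    and m0 v0 :: "nat \<Rightarrow> real ^ 'd \<Rightarrow> real"
    and C q \<gamma> :: real
  defines "N \<equiv> (\<lambda>n. \<Sum>t<T. Nt n t)"
  defines "e0N \<equiv> (\<lambda>n x. \<Sum>t<T. (real (Nt n t) / real (N n)) * e t x)"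
  defines "e0 \<equiv> (\<lambda>x. \<Sum>t<T. \<kappa> t * e t x)"
  defines "\<theta>0 \<equiv> (\<integral>w. Ypot 1 w - Ypot 0 w \<partial>P)"
  defines "\<theta>hat \<equiv> (\<lambda>n (\<omega> :: nat \<times> nat \<Rightarrow> ((real ^ 'd) \<times> real \<times> real) \<times> real).
     (1 / real (N n)) * (\<Sum>(t, i) \<in> batch_index T (Nt n).
        s_aipw_b m0 (e0N n) (Xof (fst (\<omega> (t, i)))) (Zobs (e t) (\<omega> (t, i))) (Yobs (e t) (\<omega> (t, i)))))"
  defines "V0 \<equiv> (\<integral>w. v0 1 (Xof w) / e0 (Xof w) + v0 0 (Xof w) / (1 - e0 (Xof w))
                   + (m0 1 (Xof w) - m0 0 (Xof w) - \<theta>0)\<^sup>2 \<partial>P)"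
  assumes P_prob: "prob_space P"
    and P_sets: "sets P = sets borel"
    and XX_sets: "XX \<in> sets borel"
    and XX_supp: "AE w in P. Xof w \<in> XX"
    and T2: "T \<ge> 2"
    and N_lim: "filterlim N at_top sequentially"
    and kappa_range: "\<forall>t<T. 0 < \<kappa> t \<and> \<kappa> t < 1"
    and kappa_lim: "\<forall>t<T. (\<lambda>n. real (Nt n t) / real (N n)) \<longlonglongrightarrow> \<kappa> t"
    and q2: "q > 2"
    and moment: "\<forall>z\<in>{0,1}. integrable P (\<lambda>w. \<bar>Ypot z w\<bar> powr q)
                    \<and> (\<integral>w. \<bar>Ypot z w\<bar> powr q \<partial>P) powr (1 / q) \<le> C"
    and cond2: "\<forall>z\<in>{0,1}. \<exists>h. cond_exp_version P Xof (\<lambda>w. (Ypot z w)\<^sup>2) h \<and> (\<forall>x\<in>XX. h x \<le> C)"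
    and gamma_pos: "\<gamma> > 0"
    and e_meas: "\<forall>t<T. e t \<in> borel_measurable borel"
    and e_range: "\<forall>t<T. \<forall>x\<in>XX. \<gamma> \<le> e t x \<and> e t x \<le> 1 - \<gamma>"
    and m0_def: "\<forall>z\<in>{0,1}. cond_exp_version P Xof (Ypot z) (m0 z)"
    and v0_def: "\<forall>z\<in>{0,1}. cond_exp_version P Xof (\<lambda>w. (Ypot z w - m0 z (Xof w))\<^sup>2) (v0 z)"
  shows "weak_conv_m
           (\<lambda>n. distr (PiM (batch_index T (Nt n)) (\<lambda>_. unit_measure P)) borel
                   (\<lambda>\<omega>. sqrt (real (N n)) * (\<theta>hat n \<omega> - \<theta>0)))
           (normal_measure 0 V0)"
  proof -
  interpret prob_space P by (rule P_prob)
  have g: "0 < \<gamma>" by (rule gamma_pos)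
  have Ym0[measurable]: "Ypot z \<in> borel_measurable P" for z
    using P_sets by (simp cong: measurable_cong_sets)
  have Y2: "integrable P (\<lambda>w. (Ypot z w)^2)" if "z \<in> {0,1}" for z
    using moment that q2 by (intro sq_int_from_powr[where q=q]) (auto intro: finite_measure_axioms)
  interpret S: aipw_setup P XX m0 v0 \<gamma> \<theta>0
    by unfold_locales (use P_prob P_sets XX_sets XX_supp gamma_pos Y2 m0_def v0_def \<theta>0_def in auto)
  interpret Q: prob_space S.Qm by (rule S.Q_prob)
  have U_eq: "unit_measure P = P \<Otimes>\<^sub>M S.Qm" by (rule S.U_eq)
  interpret U: prob_space "P \<Otimes>\<^sub>M S.Qm" by (intro prob_space_pair P_prob S.Q_prob)
  have em[measurable]: "e t \<in> borel_measurable borel" if "t < T" for t using e_meas that by auto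
  define J where "J n = batch_index T (Nt n)" for n
  have finJ: "finite (J n)" for n unfolding J_def by (rule batch_index_finite)
  have cardJ: "card (J n) = N n" for n unfolding J_def N_def by (rule batch_index_card)
  have J_fst: "fst j < T" if "j \<in> J n" for j n using that unfolding J_def batch_index_def by auto
  have J_N: "N n > 0" if "j \<in> J n" for j n
    using that finJ[of n] cardJ[of n] by (metis card_gt_0_iff empty_iff gr0I)
  have wsum: "(\<Sum>t<T. real (Nt n t) / real (N n)) = 1" if "N n > 0" for n
  proof -
    have "(\<Sum>t<T. real (Nt n t)) = real (N n)" by (simp add: N_def)
    then show ?thesis using that by (simp add: sum_divide_distrib[symmetric])
  qed
  have e0N_m[measurable]: "e0N n \<in> borel_measurable borel" for n
    unfolding e0N_def by (intro borel_measurable_sum borel_measurable_times borel_measurable_const) auto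
  have erng': "\<forall>t<T. \<forall>x\<in>XX. \<gamma> \<le> e t x \<and> e t x \<le> 1 - \<gamma>" by (rule e_range)
  have eps_n: "\<forall>x\<in>XX. \<gamma> \<le> e0N n x \<and> e0N n x \<le> 1 - \<gamma>" if "N n > 0" for n
    using S.var_avg(2)[of T "\<lambda>t. real (Nt n t) / real (N n)" e, OF _ wsum[OF that] e_meas e_range]
    unfolding e0N_def by auto
  have Npos_ev: "eventually (\<lambda>n. N n > 0) sequentially"
    using N_lim by (simp add: filterlim_at_top eventually_mono) (metis eventually_mono N_lim filterlim_at_top Suc_le_eq)
  have kappa_sum: "(\<Sum>t<T. \<kappa> t) = 1"
  proof -
    have "(\<lambda>n. \<Sum>t<T. real (Nt n t) / real (N n)) \<longlonglongrightarrow> (\<Sum>t<T. \<kappa> t)"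
      by (intro tendsto_sum) (use kappa_lim in auto)
    moreover have "(\<lambda>n. \<Sum>t<T. real (Nt n t) / real (N n)) \<longlonglongrightarrow> 1"
      by (rule tendsto_eventually) (use Npos_ev wsum in \<open>auto elim: eventually_mono\<close>)
    ultimately show ?thesis by (rule LIMSEQ_unique)
  qed
  have e0_rng: "\<forall>x\<in>XX. \<gamma> \<le> e0 x \<and> e0 x \<le> 1 - \<gamma>"
  proof
    fix x assume x: "x \<in> XX"
    show "\<gamma> \<le> e0 x \<and> e0 x \<le> 1 - \<gamma>"
    proof -
      have kn: "\<forall>t<T. 0 \<le> \<kappa> t" using kappa_range by (simp add: less_imp_le)
      have ex: "\<forall>t<T. \<gamma> \<le> e t x \<and> e t x \<le> 1 - \<gamma>" using e_range x by auto
      show ?thesis unfolding e0_def using S.convex_range[OF kappa_sum kn ex] by auto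
    qed
  qed
  have e0_m[measurable]: "e0 \<in> borel_measurable borel"
    unfolding e0_def by (intro borel_measurable_sum borel_measurable_times borel_measurable_const) auto
  have e0N_lim: "(\<lambda>n. e0N n x) \<longlonglongrightarrow> e0 x" for x
    unfolding e0N_def e0_def by (intro tendsto_sum tendsto_mult tendsto_const) (use kappa_lim in auto)
  define \<epsilon>c where "\<epsilon>c n = (if N n = 0 then e0 else e0N n)" for n
  have \<epsilon>c_m[measurable]: "\<epsilon>c n \<in> borel_measurable borel" for n unfolding \<epsilon>c_def by auto
  have \<epsilon>c_rng: "\<forall>x\<in>XX. \<gamma> \<le> \<epsilon>c n x \<and> \<epsilon>c n x \<le> 1 - \<gamma>" for n
    unfolding \<epsilon>c_def using e0_rng eps_n by auto
  have \<epsilon>c_lim: "(\<lambda>n. \<epsilon>c n x) \<longlonglongrightarrow> e0 x" for x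
  proof (rule Lim_transform_eventually[OF e0N_lim])
    show "eventually (\<lambda>n. e0N n x = \<epsilon>c n x) sequentially"
      using Npos_ev by eventually_elim (simp add: \<epsilon>c_def)
  qed
  have Vlim: "(\<lambda>n. \<integral>w. S.Wf (\<epsilon>c n) w \<partial>P) \<longlonglongrightarrow> (\<integral>w. S.Wf e0 w \<partial>P)"
    by (rule S.var_lim[OF \<epsilon>c_m \<epsilon>c_rng \<epsilon>c_lim e0_m e0_rng])
  have V0_eq: "V0 = (\<integral>w. S.Wf e0 w \<partial>P)"
    unfolding V0_def
  proof (rule integral_cong_AE)
    have [measurable]: "v0 1 \<in> borel_measurable borel" "v0 0 \<in> borel_measurable borel"
      "m0 1 \<in> borel_measurable borel" "m0 0 \<in> borel_measurable borel"
      using S.vm S.mm by auto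
    show "(\<lambda>w. v0 1 (Xof w) / e0 (Xof w) + v0 0 (Xof w) / (1 - e0 (Xof w)) + (m0 1 (Xof w) - m0 0 (Xof w) - \<theta>0)\<^sup>2)
      \<in> borel_measurable P" by measurable
    show "S.Wf e0 \<in> borel_measurable P" by (rule S.Wf_meas[OF e0_m])
    show "AE w in P. v0 1 (Xof w) / e0 (Xof w) + v0 0 (Xof w) / (1 - e0 (Xof w)) + (m0 1 (Xof w) - m0 0 (Xof w) - \<theta>0)\<^sup>2
       = S.Wf e0 w"
      using XX_supp by eventually_elim (simp add: S.Wf_def S.Dx_def)
  qed
  define f where "f n j = S.hs (e (fst j)) (e0N n)" for n and j :: "nat \<times> nat"
  have f_m[measurable]: "f n j \<in> borel_measurable (P \<Otimes>\<^sub>M S.Qm)" if "j \<in> J n" for n j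
    unfolding f_def using J_fst[OF that] by (intro S.hs_meas) auto
  have var_eq: "(\<Sum>j\<in>J n. \<integral>u. (f n j u)^2 \<partial>(P \<Otimes>\<^sub>M S.Qm)) / real (card (J n)) = (\<integral>w. S.Wf (\<epsilon>c n) w \<partial>P)"
    if Np: "N n > 0" for n
  proof -
    have "(\<Sum>j\<in>J n. \<integral>u. (f n j u)^2 \<partial>(P \<Otimes>\<^sub>M S.Qm))
        = (\<Sum>t<T. real (Nt n t) * (\<integral>u. (S.hs (e t) (e0N n) u)^2 \<partial>(P \<Otimes>\<^sub>M S.Qm)))"
      unfolding f_def J_def by (rule sum_batch_index)
    then have "(\<Sum>j\<in>J n. \<integral>u. (f n j u)^2 \<partial>(P \<Otimes>\<^sub>M S.Qm)) / real (card (J n))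
        = (\<Sum>t<T. real (Nt n t) / real (N n) * (\<integral>u. (S.hs (e t) (e0N n) u)^2 \<partial>(P \<Otimes>\<^sub>M S.Qm)))"
      by (simp add: cardJ sum_divide_distrib)
    also have "\<dots> = (\<integral>w. S.Wf (e0N n) w \<partial>P)"
      using S.var_avg(1)[of T "\<lambda>t. real (Nt n t) / real (N n)" e, OF _ wsum[OF Np] e_meas e_range]
      unfolding e0N_def by auto
    finally show ?thesis using Np by (simp add: \<epsilon>c_def)
  qed
  have varlim: "(\<lambda>n. (\<Sum>j\<in>J n. \<integral>u. (f n j u)^2 \<partial>(P \<Otimes>\<^sub>M S.Qm)) / real (card (J n))) \<longlonglongrightarrow> V0"
  proof (rule Lim_transform_eventually)
    show "(\<lambda>n. \<integral>w. S.Wf (\<epsilon>c n) w \<partial>P) \<longlonglongrightarrow> V0" using Vlim V0_eq by simp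
    show "eventually (\<lambda>n. (\<integral>w. S.Wf (\<epsilon>c n) w \<partial>P) = (\<Sum>j\<in>J n. \<integral>u. (f n j u)^2 \<partial>(P \<Otimes>\<^sub>M S.Qm)) / real (card (J n))) sequentially"
      using Npos_ev by eventually_elim (simp add: var_eq)
  qed
  have V0_nn: "0 \<le> V0"
    by (rule LIMSEQ_le_const[OF varlim]) (auto intro!: sum_nonneg divide_nonneg_nonneg)
  have cardJ_lim: "filterlim (\<lambda>n. card (J n)) at_top sequentially"
    using N_lim by (simp add: cardJ)
  have clt: "(\<lambda>n. \<Prod>j\<in>J n. char (distr (P \<Otimes>\<^sub>M S.Qm) borel (f n j)) (s / sqrt (card (J n))))
           \<longlonglongrightarrow> complex_of_real (exp (- (s^2 * V0 / 2)))" for s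
  proof (rule clt_env[where G="\<lambda>u. S.Gf (fst u)"])
    show "prob_space (P \<Otimes>\<^sub>M S.Qm)" by (rule U.prob_space_axioms)
    show "(\<lambda>u. S.Gf (fst u)) \<in> borel_measurable (P \<Otimes>\<^sub>M S.Qm)" by measurable
    show "integrable (P \<Otimes>\<^sub>M S.Qm) (\<lambda>x. (S.Gf (fst x))^2)" by (rule S.GU)
    show "AE x in P \<Otimes>\<^sub>M S.Qm. \<bar>f n j x\<bar> \<le> S.Gf (fst x)" if "j \<in> J n" for n j
      unfolding f_def by (rule S.hs_bound[OF eps_n[OF J_N[OF that]]])
    show "(\<integral>x. f n j x \<partial>(P \<Otimes>\<^sub>M S.Qm)) = 0" if j: "j \<in> J n" for n j
    proof -
      have t: "fst j < T" by (rule J_fst[OF j])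
      show ?thesis unfolding f_def
        by (rule S.hs_mean[OF em[OF t] e0N_m _ eps_n[OF J_N[OF j]]]) (use e_range t g in force)
    qed
    show "finite (J n)" for n by (rule finJ)
    show "filterlim (\<lambda>n. card (J n)) at_top sequentially" by (rule cardJ_lim)
    show "f n j \<in> borel_measurable (P \<Otimes>\<^sub>M S.Qm)" if "j \<in> J n" for n j using f_m[OF that] .
    show "(\<lambda>n. (\<Sum>j\<in>J n. \<integral>x. (f n j x)^2 \<partial>(P \<Otimes>\<^sub>M S.Qm)) / real (card (J n))) \<longlonglongrightarrow> V0"
      by (rule varlim)
  qed
  have S_eq: "(\<lambda>\<omega>. sqrt (real (N n)) * (\<theta>hat n \<omega> - \<theta>0)) = (\<lambda>\<omega>. \<Sum>j\<in>J n. f n j (\<omega> j) / sqrt (real (N n)))" for n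
  proof (rule ext)
    fix \<omega> :: "nat \<times> nat \<Rightarrow> ((real ^ 'd) \<times> real \<times> real) \<times> real"
    have th: "\<theta>hat n \<omega> = 1 / real (N n) * (\<Sum>j\<in>J n. f n j (\<omega> j) + \<theta>0)"
      unfolding \<theta>hat_def J_def f_def
      by (intro arg_cong[where f="\<lambda>x. 1 / real (N n) * x"] sum.cong) (auto simp: S.hs_def)
    show "sqrt (real (N n)) * (\<theta>hat n \<omega> - \<theta>0) = (\<Sum>j\<in>J n. f n j (\<omega> j) / sqrt (real (N n)))"
    proof (cases "N n = 0")
      case True
      then have "J n = {}" using finJ[of n] cardJ[of n] by simp
      then show ?thesis using True by simp
    next
      case False
      then have Np: "0 < real (N n)" by simp
      have "(\<Sum>j\<in>J n. f n j (\<omega> j) + \<theta>0) = (\<Sum>j\<in>J n. f n j (\<omega> j)) + real (N n) * \<theta>0"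
        by (simp add: sum.distrib cardJ)
      then have "sqrt (real (N n)) * (\<theta>hat n \<omega> - \<theta>0) = sqrt (real (N n)) * ((\<Sum>j\<in>J n. f n j (\<omega> j)) / real (N n))"
        unfolding th using Np by (simp add: field_simps)
      also have "\<dots> = (\<Sum>j\<in>J n. f n j (\<omega> j)) / sqrt (real (N n))"
      proof -
        have sq: "sqrt (real (N n)) * sqrt (real (N n)) = real (N n)" using Np by simp
        have sp: "sqrt (real (N n)) > 0" using Np by simp
        have gen: "\<And>a x. a > 0 \<Longrightarrow> a * (x / (a * a)) = x / (a::real)" by (simp add: field_simps)
        show ?thesis using gen[OF sp, of "\<Sum>j\<in>J n. f n j (\<omega> j)"] unfolding sq .
      qed
      also have "\<dots> = (\<Sum>j\<in>J n. f n j (\<omega> j) / sqrt (real (N n)))"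
        by (simp add: sum_divide_distrib)
      finally show ?thesis .
    qed
  qed
  have fd_m: "(\<lambda>u. f n j u / sqrt (real (N n))) \<in> borel_measurable (P \<Otimes>\<^sub>M S.Qm)" if "j \<in> J n" for n j
    using f_m[OF that] by measurable
  have Sm: "(\<lambda>\<omega>. \<Sum>j\<in>J n. f n j (\<omega> j) / sqrt (real (N n))) \<in> borel_measurable (PiM (J n) (\<lambda>_. P \<Otimes>\<^sub>M S.Qm))" for n
  proof (rule borel_measurable_sum)
    fix j assume j: "j \<in> J n"
    show "(\<lambda>\<omega>. f n j (\<omega> j) / sqrt (real (N n))) \<in> borel_measurable (PiM (J n) (\<lambda>_. P \<Otimes>\<^sub>M S.Qm))"
      using measurable_compose[OF measurable_component_singleton[OF j, of "\<lambda>_. P \<Otimes>\<^sub>M S.Qm"] fd_m[OF j]] .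
  qed
  have "weak_conv_m (\<lambda>n. distr (PiM (J n) (\<lambda>_. P \<Otimes>\<^sub>M S.Qm)) borel (\<lambda>\<omega>. \<Sum>j\<in>J n. f n j (\<omega> j) / sqrt (real (N n))))
          (normal_measure 0 V0)"
  proof (rule levy_continuity)
    fix n
    have "prob_space (PiM (J n) (\<lambda>_. P \<Otimes>\<^sub>M S.Qm))"
      by (rule prob_space_PiM) (rule U.prob_space_axioms)
    then show "real_distribution (distr (PiM (J n) (\<lambda>_. P \<Otimes>\<^sub>M S.Qm)) borel (\<lambda>\<omega>. \<Sum>j\<in>J n. f n j (\<omega> j) / sqrt (real (N n))))"
      by (rule prob_space.real_distribution_distr) (rule Sm)
  next
    show "real_distribution (normal_measure 0 V0)" by (rule normal_measure0(1)[OF V0_nn])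
  next
    fix s
    have eq: "char (distr (PiM (J n) (\<lambda>_. P \<Otimes>\<^sub>M S.Qm)) borel (\<lambda>\<omega>. \<Sum>j\<in>J n. f n j (\<omega> j) / sqrt (real (N n)))) s
        = (\<Prod>j\<in>J n. char (distr (P \<Otimes>\<^sub>M S.Qm) borel (f n j)) (s / sqrt (card (J n))))" for n
    proof -
      have "char (distr (PiM (J n) (\<lambda>_. P \<Otimes>\<^sub>M S.Qm)) borel (\<lambda>\<omega>. \<Sum>j\<in>J n. f n j (\<omega> j) / sqrt (real (N n)))) s
          = (\<Prod>j\<in>J n. char (distr (P \<Otimes>\<^sub>M S.Qm) borel (\<lambda>u. f n j u / sqrt (real (N n)))) s)"
        by (rule char_PiM_sum[OF U.prob_space_axioms finJ fd_m])
      also have "\<dots> = (\<Prod>j\<in>J n. char (distr (P \<Otimes>\<^sub>M S.Qm) borel (f n j)) (s / sqrt (card (J n))))"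
        by (rule prod.cong[OF refl]) (simp add: char_distr_div[OF f_m] cardJ)
      finally show ?thesis .
    qed
    show "(\<lambda>n. char (distr (PiM (J n) (\<lambda>_. P \<Otimes>\<^sub>M S.Qm)) borel (\<lambda>\<omega>. \<Sum>j\<in>J n. f n j (\<omega> j) / sqrt (real (N n)))) s)
        \<longlonglongrightarrow> char (normal_measure 0 V0) s"
      unfolding eq normal_measure0(2)[OF V0_nn] by (rule clt)
  qed
  then show ?thesis unfolding U_eq S_eq J_def .
qed


end
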